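(* Let $p$ be a prime and let $G=\mathrm{SL}_2(\mathbb Q)$ act on the tree $\Delta_p$ via $G\subset\mathrm{SL}_2(\mathbb Q_p)$. Then the set of apartments $\Sigma$ of $\Delta_p$ such that the action of $G$ is strongly transitive with respect to the apartment system $G\Sigma=\{g\Sigma:g\in G\}$ is countable, whereas the complete apartment system of $\Delta_p$ is uncountable.
   Context: $\Delta_p$ is the Bruhat–Tits tree of $\mathrm{SL}_2(\mathbb Q_p)$ (vertices: homothety classes of $\mathbb Z_p$-lattices in $\mathbb Q_p^2$, adjacent if representatives satisfy $L\supset L'\supset pL$), a building with chambers the edges; the complete apartment system is the set of all bi-infinite lines (apartments) in the tree. An apartment system is a set $\mathcal A$ of apartments such that any two edges lie in a common member; the action is strongly transitive with respect to a $G$-invariant $\mathcal A$ if $G$ is transitive on pairs $(\Sigma,C)$ with $\Sigma\in\mathcal A$ and $C$ an edge of $\Sigma$. *)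

theory Defs
  imports "HOL-Analysis.Determinants" "HOL-Computational_Algebra.Primes"
begin

definition padic_val :: "nat \<Rightarrow> rat \<Rightarrow> int" where
  "padic_val p q = (case quotient_of q of (a, b) \<Rightarrow>
      int (multiplicity (int p) a) - int (multiplicity (int p) b))"

definition padic_abs :: "nat \<Rightarrow> rat \<Rightarrow> real" where
  "padic_abs p q = (if q = 0 then 0 else real p powr (- real_of_int (padic_val p q)))"

definition p_cauchy :: "nat \<Rightarrow> (nat \<Rightarrow> rat) \<Rightarrow> bool" where
  "p_cauchy p s \<longleftrightarrow> (\<forall>e>0. \<exists>N. \<forall>m\<ge>N. \<forall>n\<ge>N. padic_abs p (s m - s n) < e)"

definition p_equiv :: "nat \<Rightarrow> (nat \<Rightarrow> rat) \<Rightarrow> (nat \<Rightarrow> rat) \<Rightarrow> bool" where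
  "p_equiv p s t \<longleftrightarrow> (\<forall>e>0. \<exists>N. \<forall>n\<ge>N. padic_abs p (s n - t n) < e)"

type_synonym qp = "(nat \<Rightarrow> rat) set"

text \<open>An element of Q_p is an equivalence class of p-adic Cauchy sequences of rationals.\<close>
definition qp_class :: "nat \<Rightarrow> (nat \<Rightarrow> rat) \<Rightarrow> qp" where
  "qp_class p s = {t. p_cauchy p t \<and> p_equiv p s t}"

definition Qp :: "nat \<Rightarrow> qp set" where
  "Qp p = qp_class p ` {s. p_cauchy p s}"

definition qp_rep :: "qp \<Rightarrow> nat \<Rightarrow> rat" where
  "qp_rep x = (SOME s. s \<in> x)"

definition qp_add :: "nat \<Rightarrow> qp \<Rightarrow> qp \<Rightarrow> qp" where
  "qp_add p x y = qp_class p (\<lambda>n. qp_rep x n + qp_rep y n)"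

definition qp_mult :: "nat \<Rightarrow> qp \<Rightarrow> qp \<Rightarrow> qp" where
  "qp_mult p x y = qp_class p (\<lambda>n. qp_rep x n * qp_rep y n)"

definition qp_of_rat :: "nat \<Rightarrow> rat \<Rightarrow> qp" where
  "qp_of_rat p r = qp_class p (\<lambda>_. r)"

definition Zp :: "nat \<Rightarrow> qp set" where
  "Zp p = {x \<in> Qp p. \<exists>s\<in>x. \<forall>n. padic_abs p (s n) \<le> 1}"

type_synonym qp2 = "qp \<times> qp"
type_synonym lattice = "qp2 set"
type_synonym vertex = "lattice set"
type_synonym edge = "vertex set"
type_synonym apartment = "edge set"

text \<open>Z_p-span of a Q_p-basis (v1, v2) of Q_p^2.\<close>
definition is_lattice :: "nat \<Rightarrow> lattice \<Rightarrow> bool" where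
  "is_lattice p L \<longleftrightarrow> (\<exists>a b c d. a \<in> Qp p \<and> b \<in> Qp p \<and> c \<in> Qp p \<and> d \<in> Qp p \<and>
     qp_add p (qp_mult p a d) (qp_mult p (qp_of_rat p (-1)) (qp_mult p b c)) \<noteq> qp_of_rat p 0 \<and>
     L = {(qp_add p (qp_mult p x a) (qp_mult p y c), qp_add p (qp_mult p x b) (qp_mult p y d))
          | x y. x \<in> Zp p \<and> y \<in> Zp p})"

definition scale_lattice :: "nat \<Rightarrow> qp \<Rightarrow> lattice \<Rightarrow> lattice" where
  "scale_lattice p c L = (\<lambda>(u, v). (qp_mult p c u, qp_mult p c v)) ` L"

definition homothety_class :: "nat \<Rightarrow> lattice \<Rightarrow> vertex" where
  "homothety_class p L = {scale_lattice p c L | c. c \<in> Qp p \<and> c \<noteq> qp_of_rat p 0}"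

definition bt_vertices :: "nat \<Rightarrow> vertex set" where
  "bt_vertices p = homothety_class p ` {L. is_lattice p L}"

definition bt_adj :: "nat \<Rightarrow> vertex \<Rightarrow> vertex \<Rightarrow> bool" where
  "bt_adj p x y \<longleftrightarrow> x \<in> bt_vertices p \<and> y \<in> bt_vertices p \<and>
     (\<exists>L\<in>x. \<exists>L'\<in>y. L' \<subset> L \<and> scale_lattice p (qp_of_rat p (of_nat p)) L \<subset> L')"

text \<open>Chambers of the building: the edges of the tree.\<close>
definition bt_edges :: "nat \<Rightarrow> edge set" where
  "bt_edges p = {{x, y} | x y. bt_adj p x y}"

text \<open>Apartments: bi-infinite lines in the tree, given by their sets of edges.\<close>
definition bt_apartments :: "nat \<Rightarrow> apartment set" where
  "bt_apartments p = {range (\<lambda>i. {f i, f (i + 1)}) | f :: int \<Rightarrow> vertex.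
      inj f \<and> (\<forall>i. bt_adj p (f i) (f (i + 1)))}"

definition apartment_system :: "nat \<Rightarrow> apartment set \<Rightarrow> bool" where
  "apartment_system p A \<longleftrightarrow> A \<subseteq> bt_apartments p \<and>
     (\<forall>C\<in>bt_edges p. \<forall>D\<in>bt_edges p. \<exists>S\<in>A. C \<in> S \<and> D \<in> S)"

definition SL2Q :: "(rat^2^2) set" where
  "SL2Q = {g. det g = 1}"

definition act_vec :: "nat \<Rightarrow> rat^2^2 \<Rightarrow> qp2 \<Rightarrow> qp2" where
  "act_vec p g = (\<lambda>(u, v).
     (qp_add p (qp_mult p (qp_of_rat p (g$1$1)) u) (qp_mult p (qp_of_rat p (g$1$2)) v),
      qp_add p (qp_mult p (qp_of_rat p (g$2$1)) u) (qp_mult p (qp_of_rat p (g$2$2)) v)))"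

definition act_vertex :: "nat \<Rightarrow> rat^2^2 \<Rightarrow> vertex \<Rightarrow> vertex" where
  "act_vertex p g x = (\<lambda>L. act_vec p g ` L) ` x"

definition act_edge :: "nat \<Rightarrow> rat^2^2 \<Rightarrow> edge \<Rightarrow> edge" where
  "act_edge p g C = act_vertex p g ` C"

definition act_apartment :: "nat \<Rightarrow> rat^2^2 \<Rightarrow> apartment \<Rightarrow> apartment" where
  "act_apartment p g S = act_edge p g ` S"

definition orbit_apartment :: "nat \<Rightarrow> apartment \<Rightarrow> apartment set" where
  "orbit_apartment p S = (\<lambda>g. act_apartment p g S) ` SL2Q"

definition strongly_transitive_wrt :: "nat \<Rightarrow> apartment set \<Rightarrow> bool" where
  "strongly_transitive_wrt p A \<longleftrightarrow> apartment_system p A \<and>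
     (\<forall>S\<in>A. \<forall>C\<in>S. \<forall>S'\<in>A. \<forall>C'\<in>S'. \<exists>g\<in>SL2Q.
        act_apartment p g S = S' \<and> act_edge p g C = C')"

end

theory Submission
  imports Defs
begin

locale padic =
  fixes p :: nat
  assumes prime: "prime p"
begin

lemma prime_int: "prime (int p)" using prime by simp
lemma p_nonunit: "\<not> is_unit (int p)" using prime_int not_prime_unit by blast
lemma p_gt1: "p > 1" using prime prime_gt_1_nat by blast
lemma p_real_gt1: "real p > 1" using p_gt1 by simp

lemma mult_distr:
  "x \<noteq> 0 \<Longrightarrow> y \<noteq> 0 \<Longrightarrow> multiplicity (int p) (x * y) = multiplicity (int p) x + multiplicity (int p) y"
  using prime_int by (intro prime_elem_multiplicity_mult_distrib) auto

lemma pv_frac: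
  assumes "a \<noteq> 0" "b \<noteq> 0"
  shows "padic_val p (of_int a / of_int b) = int (multiplicity (int p) a) - int (multiplicity (int p) b)"
proof -
  obtain c d where q: "quotient_of (of_int a / of_int b) = (c, d)" by (cases "quotient_of (of_int a / of_int b)")
  have d: "d > 0" using quotient_of_denom_pos[OF q] .
  have e: "(of_int a / of_int b :: rat) = of_int c / of_int d" using quotient_of_div[OF q] .
  hence "of_int a * of_int d = (of_int c * of_int b :: rat)" using assms d
    by (simp add: field_simps)
  hence ad: "a * d = c * b" by (metis of_int_eq_iff of_int_mult)
  have c: "c \<noteq> 0" using ad assms d by auto
  have "multiplicity (int p) (a * d) = multiplicity (int p) (c * b)" using ad by simp
  hence "multiplicity (int p) a + multiplicity (int p) d = multiplicity (int p) c + multiplicity (int p) b"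
    using assms c d by (simp add: mult_distr)
  thus ?thesis unfolding padic_val_def q by simp
qed

lemma rat_frac: assumes "x \<noteq> 0" obtains a b where "a \<noteq> 0" "b \<noteq> 0" "x = (of_int a / of_int b :: rat)"
proof -
  obtain c d where q: "quotient_of x = (c, d)" by (cases "quotient_of x")
  have "d > 0" using quotient_of_denom_pos[OF q] .
  moreover have "x = of_int c / of_int d" using quotient_of_div[OF q] .
  ultimately show ?thesis using that[of c d] assms by auto
qed

lemma pv_mult: assumes "x \<noteq> 0" "y \<noteq> 0" shows "padic_val p (x * y) = padic_val p x + padic_val p y"
proof -
  obtain a b where ab: "a \<noteq> 0" "b \<noteq> 0" "x = of_int a / of_int b" using rat_frac assms(1) by metis
  obtain c d where cd: "c \<noteq> 0" "d \<noteq> 0" "y = of_int c / of_int d" using rat_frac assms(2) by metis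
  have e: "x * y = of_int (a * c) / of_int (b * d)" using ab cd by simp
  have 1: "padic_val p (x * y) = int (multiplicity (int p) (a*c)) - int (multiplicity (int p) (b*d))"
    unfolding e by (rule pv_frac) (use ab cd in auto)
  have 2: "padic_val p x = int (multiplicity (int p) a) - int (multiplicity (int p) b)"
    unfolding ab(3) using pv_frac ab by blast
  have 3: "padic_val p y = int (multiplicity (int p) c) - int (multiplicity (int p) d)"
    unfolding cd(3) using pv_frac cd by blast
  have 4: "multiplicity (int p) (a*c) = multiplicity (int p) a + multiplicity (int p) c"
    using mult_distr ab cd by blast
  have 5: "multiplicity (int p) (b*d) = multiplicity (int p) b + multiplicity (int p) d"
    using mult_distr ab cd by blast
  show ?thesis unfolding 1 2 3 4 5 by simp
qed

lemma pv_add: assumes "x \<noteq> 0" "y \<noteq> 0" "x + y \<noteq> 0"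
  shows "padic_val p (x + y) \<ge> min (padic_val p x) (padic_val p y)"
proof -
  obtain a b where ab: "a \<noteq> 0" "b \<noteq> 0" "x = of_int a / of_int b" using rat_frac assms(1) by metis
  obtain c d where cd: "c \<noteq> 0" "d \<noteq> 0" "y = of_int c / of_int d" using rat_frac assms(2) by metis
  have s: "x + y = of_int (a * d + c * b) / of_int (b * d)" using ab cd by (simp add: add_frac_eq)
  have nz: "a * d + c * b \<noteq> 0"
  proof
    assume "a * d + c * b = 0"
    hence "x + y = 0" unfolding s by (metis div_0 of_int_0)
    thus False using assms(3) by simp
  qed
  define m where "m = min (multiplicity (int p) (a*d)) (multiplicity (int p) (c*b))"
  have "int p ^ m dvd a * d" unfolding m_def by (rule multiplicity_dvd') (rule min.cobounded1)
  moreover have "int p ^ m dvd c * b" unfolding m_def by (rule multiplicity_dvd') (rule min.cobounded2)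
  ultimately have "int p ^ m dvd a * d + c * b" by (rule dvd_add)
  moreover have "\<not> is_unit (int p)" using prime_int not_prime_unit by blast
  ultimately have "m \<le> multiplicity (int p) (a * d + c * b)"
    using nz by (intro multiplicity_geI)
  hence m: "int m \<le> int (multiplicity (int p) (a * d + c * b))" by simp
  have "padic_val p (x + y) = int (multiplicity (int p) (a * d + c * b)) - int (multiplicity (int p) (b*d))"
    unfolding s by (rule pv_frac) (use nz ab cd in auto)
  moreover have "padic_val p x = int (multiplicity (int p) a) - int (multiplicity (int p) b)"
    unfolding ab(3) using pv_frac ab by blast
  moreover have "padic_val p y = int (multiplicity (int p) c) - int (multiplicity (int p) d)"
    unfolding cd(3) using pv_frac cd by blast
  moreover have "multiplicity (int p) (a*d) = multiplicity (int p) a + multiplicity (int p) d"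
    using mult_distr ab cd by blast
  moreover have "multiplicity (int p) (c*b) = multiplicity (int p) c + multiplicity (int p) b"
    using mult_distr ab cd by blast
  moreover have "multiplicity (int p) (b*d) = multiplicity (int p) b + multiplicity (int p) d"
    using mult_distr ab cd by blast
  ultimately show ?thesis using m unfolding m_def min_def by (auto split: if_splits)
qed

lemma mult_uminus: "multiplicity (int p) (- a) = multiplicity (int p) a"
proof -
  have "multiplicity (int p) (- a) = multiplicity (int p) (normalize (- a))"
    by (rule multiplicity_normalize_right[symmetric])
  also have "normalize (- a) = normalize a" by simp
  finally show ?thesis by (metis multiplicity_normalize_right)
qed

lemma pv_minus: "padic_val p (- x) = padic_val p x"
proof (cases "x = 0")
  case False
  obtain a b where ab: "a \<noteq> 0" "b \<noteq> 0" "x = of_int a / of_int b" using rat_frac False by metis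
  have e: "- x = of_int (- a) / of_int b" using ab by simp
  have 1: "padic_val p (- x) = int (multiplicity (int p) (- a)) - int (multiplicity (int p) b)"
    unfolding e by (rule pv_frac) (use ab in auto)
  have 2: "padic_val p x = int (multiplicity (int p) a) - int (multiplicity (int p) b)"
    unfolding ab(3) by (rule pv_frac) (use ab in auto)
  show ?thesis unfolding 1 2 mult_uminus ..
qed simp

lemma pv_int: "n \<noteq> 0 \<Longrightarrow> padic_val p (of_int n) = int (multiplicity (int p) n)"
  using pv_frac[of n 1] by simp

lemma pv_p: "padic_val p (of_nat p) = 1"
proof -
  have "multiplicity (int p) (int p) = 1" using p_nonunit p_gt1 by (intro multiplicity_self) auto
  hence "padic_val p (of_int (int p)) = 1" using pv_int[of "int p"] p_gt1 by simp
  thus ?thesis by simp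
qed

lemma pv_p_power: "padic_val p ((of_nat p) ^ k) = int k"
proof (induction k)
  case 0 show ?case using pv_int[of 1] by simp
next
  case (Suc k) thus ?case using p_gt1 by (simp add: pv_mult pv_p)
qed

lemma pv_inverse: "x \<noteq> 0 \<Longrightarrow> padic_val p (inverse x) = - padic_val p x"
  using pv_mult[of x "inverse x"] pv_int[of 1] by simp

lemma pv_powi: "padic_val p ((of_nat p) powi k) = k"
proof (cases "k \<ge> 0")
  case True
  then obtain n where n: "k = int n" using nonneg_eq_int by blast
  have "(of_nat p :: rat) powi k = of_nat p ^ n" unfolding n by (simp add: power_int_def)
  thus ?thesis using pv_p_power n by simp
next
  case False
  then obtain n where n: "k = - int n" by (intro that[of "nat (- k)"]) simp
  have "(of_nat p :: rat) powi k = inverse (of_nat p ^ n)" unfolding n by (simp add: power_int_def power_inverse)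
  moreover have "(of_nat p :: rat) ^ n \<noteq> 0" using p_gt1 by simp
  ultimately show ?thesis using pv_p_power n pv_inverse by simp
qed

lemma pv_int_nonneg: "n \<noteq> 0 \<Longrightarrow> padic_val p (of_int n) \<ge> 0"
  by (simp add: pv_int)

abbreviation pa where "pa \<equiv> padic_abs p"

lemma pa_def': "pa x = (if x = 0 then 0 else real p powr (- real_of_int (padic_val p x)))"
  by (simp add: padic_abs_def)

lemma pa_nonneg[simp]: "pa x \<ge> 0" by (simp add: padic_abs_def)
lemma pa_zero[simp]: "pa 0 = 0" by (simp add: padic_abs_def)
lemma pa_eq0[simp]: "pa x = 0 \<longleftrightarrow> x = 0" using p_gt1 by (simp add: padic_abs_def)
lemma pa_pos[simp]: "pa x > 0 \<longleftrightarrow> x \<noteq> 0" using pa_nonneg[of x] pa_eq0[of x] by linarith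
lemma pa_minus[simp]: "pa (- x) = pa x" by (simp add: padic_abs_def pv_minus)
lemma pa_sym: "pa (x - y) = pa (y - x)" by (metis minus_diff_eq pa_minus)

lemma pa_mult: "pa (x * y) = pa x * pa y"
  using p_gt1 by (auto simp add: padic_abs_def pv_mult powr_add[symmetric])

lemma pa_ultra: "pa (x + y) \<le> max (pa x) (pa y)"
proof -
  consider "x = 0" | "y = 0" | "x + y = 0" | "x \<noteq> 0 \<and> y \<noteq> 0 \<and> x + y \<noteq> 0" by blast
  thus ?thesis
  proof cases
    case 4
    hence h: "padic_val p (x + y) \<ge> min (padic_val p x) (padic_val p y)" using pv_add by blast
    show ?thesis
    proof (cases "padic_val p x \<le> padic_val p y")
      case True
      hence "pa (x + y) \<le> pa x" using 4 h p_real_gt1 by (simp add: padic_abs_def)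
      thus ?thesis by simp
    next
      case False
      hence "pa (x + y) \<le> pa y" using 4 h p_real_gt1 by (simp add: padic_abs_def)
      thus ?thesis by simp
    qed
  qed (use pa_nonneg in \<open>auto simp: le_max_iff_disj\<close>)
qed

lemma pa_ultra_diff: "pa (x - y) \<le> max (pa x) (pa y)"
  using pa_ultra[of x "- y"] by simp

lemma pa_triangle: "pa (x - z) \<le> max (pa (x - y)) (pa (y - z))"
  using pa_ultra[of "x - y" "y - z"] by simp

lemma pa_strict: assumes "pa y < pa x" shows "pa (x + y) = pa x"
proof -
  have "pa x = pa ((x + y) + (- y))" by simp
  also have "\<dots> \<le> max (pa (x + y)) (pa y)" using pa_ultra[of "x + y" "- y"] by simp
  finally have "pa x \<le> pa (x + y)" using assms by auto
  moreover have "pa (x + y) \<le> pa x" using pa_ultra[of x y] assms by simp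
  ultimately show ?thesis by simp
qed

lemma pa_one[simp]: "pa 1 = 1" using pv_int[of 1] p_gt1 by (simp add: padic_abs_def)

lemma pa_int_le1: "pa (of_int n) \<le> 1"
proof (cases "n = 0")
  case False
  hence "real p powr (- real_of_int (padic_val p (of_int n))) \<le> real p powr 0"
    using pv_int_nonneg[of n] p_real_gt1 by (intro powr_mono) auto
  thus ?thesis using False p_gt1 by (simp add: padic_abs_def)
qed simp

lemma pa_powi: "pa ((of_nat p) powi k) = real p powr (- real_of_int k)"
  using p_gt1 by (simp add: padic_abs_def pv_powi)

lemma pa_p: "pa (of_nat p) = 1 / real p"
  using pv_p p_gt1 by (simp add: padic_abs_def powr_minus_divide)

end


context padic begin

abbreviation cauchy where "cauchy \<equiv> p_cauchy p"
abbreviation equiv where "equiv \<equiv> p_equiv p"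
abbreviation cl where "cl \<equiv> qp_class p"

lemma pa_add_lt: "pa a < e \<Longrightarrow> pa b < e \<Longrightarrow> pa (a + b) < e"
  using pa_ultra[of a b] by linarith

lemma pa_add_le: "pa a \<le> e \<Longrightarrow> pa b \<le> e \<Longrightarrow> pa (a + b) \<le> e"
  using pa_ultra[of a b] by linarith

lemma equiv_refl: "equiv s s" unfolding p_equiv_def by simp

lemma equiv_sym: "equiv s t \<Longrightarrow> equiv t s" unfolding p_equiv_def by (metis pa_sym)

lemma equiv_trans: assumes "equiv s t" "equiv t u" shows "equiv s u"
  unfolding p_equiv_def
proof (intro allI impI)
  fix e :: real assume e: "e > 0"
  obtain N1 where N1: "\<forall>n\<ge>N1. pa (s n - t n) < e" using assms(1) e unfolding p_equiv_def by blast
  obtain N2 where N2: "\<forall>n\<ge>N2. pa (t n - u n) < e" using assms(2) e unfolding p_equiv_def by blast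
  show "\<exists>N. \<forall>n\<ge>N. pa (s n - u n) < e"
  proof (intro exI allI impI)
    fix n assume "max N1 N2 \<le> n"
    hence "pa (s n - t n) < e" "pa (t n - u n) < e" using N1 N2 by auto
    hence "pa ((s n - t n) + (t n - u n)) < e" by (rule pa_add_lt)
    thus "pa (s n - u n) < e" by simp
  qed
qed

lemma cauchy_const[simp]: "cauchy (\<lambda>_. r)" unfolding p_cauchy_def by auto

lemma cauchy_bounded: assumes "cauchy s" shows "\<exists>B>0. \<forall>n. pa (s n) \<le> B"
proof -
  obtain N where N: "\<forall>m\<ge>N. \<forall>n\<ge>N. pa (s m - s n) < 1" using assms unfolding p_cauchy_def
    by (meson zero_less_one)
  define B where "B = (\<Sum>n\<le>N. pa (s n)) + 1"
  have sum_ge: "pa (s n) \<le> (\<Sum>n\<le>N. pa (s n))" if "n \<le> N" for n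
    using that by (intro member_le_sum) auto
  have "pa (s n) \<le> B" for n
  proof (cases "n \<le> N")
    case True thus ?thesis using sum_ge[of n] unfolding B_def by simp
  next
    case False
    have "pa (s n) = pa ((s n - s N) + s N)" by simp
    also have "\<dots> \<le> max (pa (s n - s N)) (pa (s N))" by (rule pa_ultra)
    also have "\<dots> \<le> B"
    proof -
      have "pa (s n - s N) < 1" using N False by simp
      moreover have "pa (s N) \<le> (\<Sum>n\<le>N. pa (s n))" using sum_ge[of N] by simp
      moreover have "(\<Sum>n\<le>N. pa (s n)) \<ge> 0" by (intro sum_nonneg) simp
      ultimately show ?thesis unfolding B_def by linarith
    qed
    finally show ?thesis .
  qed
  moreover have "B > 0" unfolding B_def using sum_nonneg[of "{..N}" "\<lambda>n. pa (s n)"] by simp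
  ultimately show ?thesis by blast
qed

lemma equiv_add: assumes "equiv s s'" "equiv t t'"
  shows "equiv (\<lambda>n. s n + t n) (\<lambda>n. s' n + t' n)"
  unfolding p_equiv_def
proof (intro allI impI)
  fix e :: real assume e: "e > 0"
  obtain N1 where N1: "\<forall>n\<ge>N1. pa (s n - s' n) < e" using assms(1) e unfolding p_equiv_def by blast
  obtain N2 where N2: "\<forall>n\<ge>N2. pa (t n - t' n) < e" using assms(2) e unfolding p_equiv_def by blast
  show "\<exists>N. \<forall>n\<ge>N. pa (s n + t n - (s' n + t' n)) < e"
  proof (intro exI allI impI)
    fix n assume "max N1 N2 \<le> n"
    hence "pa (s n - s' n) < e" "pa (t n - t' n) < e" using N1 N2 by auto
    moreover have eq: "s n + t n - (s' n + t' n) = (s n - s' n) + (t n - t' n)" by simp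
    ultimately show "pa (s n + t n - (s' n + t' n)) < e" unfolding eq using pa_add_lt by blast
  qed
qed

lemma cauchy_equiv_shift: "cauchy s \<longleftrightarrow> (\<forall>e>0. \<exists>N. \<forall>m\<ge>N. \<forall>n\<ge>N. pa (s m - s n) < e)"
  unfolding p_cauchy_def ..

lemma cauchy_add[simp]: assumes "cauchy s" "cauchy t" shows "cauchy (\<lambda>n. s n + t n)"
  unfolding p_cauchy_def
proof (intro allI impI)
  fix e :: real assume e: "e > 0"
  obtain N1 where N1: "\<forall>m\<ge>N1. \<forall>n\<ge>N1. pa (s m - s n) < e" using assms(1) e unfolding p_cauchy_def by blast
  obtain N2 where N2: "\<forall>m\<ge>N2. \<forall>n\<ge>N2. pa (t m - t n) < e" using assms(2) e unfolding p_cauchy_def by blast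
  show "\<exists>N. \<forall>m\<ge>N. \<forall>n\<ge>N. pa (s m + t m - (s n + t n)) < e"
  proof (intro exI allI impI)
    fix m n assume "max N1 N2 \<le> m" "max N1 N2 \<le> n"
    hence "pa (s m - s n) < e" "pa (t m - t n) < e" using N1 N2 by auto
    moreover have eq: "s m + t m - (s n + t n) = (s m - s n) + (t m - t n)" by simp
    ultimately show "pa (s m + t m - (s n + t n)) < e" unfolding eq using pa_add_lt by blast
  qed
qed

lemma mult_diff_bound:
  assumes "pa a \<le> B" "pa b' \<le> B"
  shows "pa (a * b - a' * b') \<le> B * max (pa (a - a')) (pa (b - b'))"
proof -
  have eq: "a * b - a' * b' = a * (b - b') + (a - a') * b'" by (simp add: algebra_simps)
  have "pa (a * b - a' * b') \<le> max (pa (a * (b - b'))) (pa ((a - a') * b'))"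
    unfolding eq by (rule pa_ultra)
  also have "\<dots> = max (pa a * pa (b - b')) (pa (a - a') * pa b')" by (simp only: pa_mult)
  also have "\<dots> \<le> max (B * pa (b - b')) (B * pa (a - a'))"
    using assms by (intro max.mono) (auto simp: mult.commute intro: mult_right_mono)
  also have "\<dots> \<le> B * max (pa (a - a')) (pa (b - b'))"
  proof -
    have B0: "B \<ge> 0" using assms pa_nonneg[of a] by linarith
    show ?thesis using B0 by (intro max.boundedI mult_left_mono) auto
  qed
  finally show ?thesis .
qed

lemma cauchy_mult[simp]: assumes "cauchy s" "cauchy t" shows "cauchy (\<lambda>n. s n * t n)"
  unfolding p_cauchy_def
proof (intro allI impI)
  fix e :: real assume e: "e > 0"
  obtain B1 where B1: "B1 > 0" "\<forall>n. pa (s n) \<le> B1" using cauchy_bounded[OF assms(1)] by blast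
  obtain B2 where B2: "B2 > 0" "\<forall>n. pa (t n) \<le> B2" using cauchy_bounded[OF assms(2)] by blast
  define B where "B = max B1 B2"
  have B: "B > 0" "\<forall>n. pa (s n) \<le> B" "\<forall>n. pa (t n) \<le> B" using B1 B2 unfolding B_def
    by (auto intro: le_max_iff_disj[THEN iffD2])
  have eB: "e / B > 0" using e B by simp
  obtain N1 where N1: "\<forall>m\<ge>N1. \<forall>n\<ge>N1. pa (s m - s n) < e / B" using assms(1) eB unfolding p_cauchy_def by blast
  obtain N2 where N2: "\<forall>m\<ge>N2. \<forall>n\<ge>N2. pa (t m - t n) < e / B" using assms(2) eB unfolding p_cauchy_def by blast
  show "\<exists>N. \<forall>m\<ge>N. \<forall>n\<ge>N. pa (s m * t m - s n * t n) < e"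
  proof (intro exI allI impI)
    fix m n assume mn: "max N1 N2 \<le> m" "max N1 N2 \<le> n"
    have "pa (s m * t m - s n * t n) \<le> B * max (pa (s m - s n)) (pa (t m - t n))"
      using B by (intro mult_diff_bound) auto
    also have "\<dots> < B * (e / B)" using B N1 N2 mn by (intro mult_strict_left_mono) auto
    also have "\<dots> = e" using B by simp
    finally show "pa (s m * t m - s n * t n) < e" .
  qed
qed

lemma equiv_mult: assumes "cauchy s" "cauchy t'" "equiv s s'" "equiv t t'"
  shows "equiv (\<lambda>n. s n * t n) (\<lambda>n. s' n * t' n)"
  unfolding p_equiv_def
proof (intro allI impI)
  fix e :: real assume e: "e > 0"
  obtain B1 where B1: "B1 > 0" "\<forall>n. pa (s n) \<le> B1" using cauchy_bounded[OF assms(1)] by blast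
  obtain B2 where B2: "B2 > 0" "\<forall>n. pa (t' n) \<le> B2" using cauchy_bounded[OF assms(2)] by blast
  define B where "B = max B1 B2"
  have B: "B > 0" "\<forall>n. pa (s n) \<le> B" "\<forall>n. pa (t' n) \<le> B" using B1 B2 unfolding B_def
    by (auto intro: le_max_iff_disj[THEN iffD2])
  have eB: "e / B > 0" using e B by simp
  obtain N1 where N1: "\<forall>n\<ge>N1. pa (s n - s' n) < e / B" using assms(3) eB unfolding p_equiv_def by blast
  obtain N2 where N2: "\<forall>n\<ge>N2. pa (t n - t' n) < e / B" using assms(4) eB unfolding p_equiv_def by blast
  show "\<exists>N. \<forall>n\<ge>N. pa (s n * t n - s' n * t' n) < e"
  proof (intro exI allI impI)
    fix n assume mn: "max N1 N2 \<le> n"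
    have "pa (s n * t n - s' n * t' n) \<le> B * max (pa (s n - s' n)) (pa (t n - t' n))"
      using B by (intro mult_diff_bound) auto
    also have "\<dots> < B * (e / B)" using B N1 N2 mn by (intro mult_strict_left_mono) auto
    also have "\<dots> = e" using B by simp
    finally show "pa (s n * t n - s' n * t' n) < e" .
  qed
qed

lemma equiv_cauchy: assumes "equiv s t" "cauchy s" shows "cauchy t"
  unfolding p_cauchy_def
proof (intro allI impI)
  fix e :: real assume e: "e > 0"
  obtain N1 where N1: "\<forall>m\<ge>N1. \<forall>n\<ge>N1. pa (s m - s n) < e" using assms(2) e unfolding p_cauchy_def by blast
  obtain N2 where N2: "\<forall>n\<ge>N2. pa (s n - t n) < e" using assms(1) e unfolding p_equiv_def by blast
  show "\<exists>N. \<forall>m\<ge>N. \<forall>n\<ge>N. pa (t m - t n) < e"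
  proof (intro exI allI impI)
    fix m n assume mn: "max N1 N2 \<le> m" "max N1 N2 \<le> n"
    have "t m - t n = (t m - s m) + ((s m - s n) + (s n - t n))" by simp
    moreover have "pa (t m - s m) < e" using N2 mn pa_sym[of "t m" "s m"] by simp
    moreover have "pa (s m - s n) < e" "pa (s n - t n) < e" using N1 N2 mn by auto
    ultimately show "pa (t m - t n) < e" by (metis pa_add_lt)
  qed
qed

lemma cl_mem: "cauchy s \<Longrightarrow> s \<in> cl s" unfolding qp_class_def by (simp add: equiv_refl)

lemma cl_eq_iff: assumes "cauchy s" "cauchy t" shows "cl s = cl t \<longleftrightarrow> equiv s t"
proof
  assume "cl s = cl t"
  hence "t \<in> cl s" using cl_mem[OF assms(2)] by simp
  thus "equiv s t" unfolding qp_class_def by simp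
next
  assume st: "equiv s t"
  have ts: "equiv t s" using st by (rule equiv_sym)
  show "cl s = cl t" unfolding qp_class_def
  proof (intro Collect_cong conj_cong refl iffI)
    fix u assume "equiv s u" thus "equiv t u" using ts equiv_trans by blast
  next
    fix u assume "equiv t u" thus "equiv s u" using st equiv_trans by blast
  qed
qed

lemma cl_in_Qp[simp]: "cauchy s \<Longrightarrow> cl s \<in> Qp p" unfolding Qp_def by (rule imageI) simp

lemma Qp_E: assumes "x \<in> Qp p" obtains s where "cauchy s" "x = cl s"
  using assms unfolding Qp_def by blast

lemma rep_cl: assumes "cauchy s" shows "cauchy (qp_rep (cl s))" "equiv s (qp_rep (cl s))"
proof -
  have "qp_rep (cl s) \<in> cl s" unfolding qp_rep_def using cl_mem[OF assms] by (rule someI[of "\<lambda>t. t \<in> cl s"])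
  thus "cauchy (qp_rep (cl s))" "equiv s (qp_rep (cl s))" unfolding qp_class_def by auto
qed

lemma Qp_rep: assumes "x \<in> Qp p" shows "cauchy (qp_rep x)" "cl (qp_rep x) = x"
proof -
  obtain s where s: "cauchy s" "x = cl s" using assms Qp_E by blast
  note r = rep_cl[OF s(1)]
  show "cauchy (qp_rep x)" unfolding s(2) by (rule r(1))
  have "cl (qp_rep (cl s)) = cl s" using cl_eq_iff[OF r(1) s(1)] equiv_sym[OF r(2)] by blast
  thus "cl (qp_rep x) = x" unfolding s(2) .
qed

lemma add_cl[simp]: assumes "cauchy s" "cauchy t" shows "qp_add p (cl s) (cl t) = cl (\<lambda>n. s n + t n)"
proof -
  have e: "equiv (\<lambda>n. qp_rep (cl s) n + qp_rep (cl t) n) (\<lambda>n. s n + t n)"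
    by (rule equiv_add[OF equiv_sym[OF rep_cl(2)[OF assms(1)]] equiv_sym[OF rep_cl(2)[OF assms(2)]]])
  have c: "cauchy (\<lambda>n. qp_rep (cl s) n + qp_rep (cl t) n)"
    using rep_cl(1)[OF assms(1)] rep_cl(1)[OF assms(2)] by (rule cauchy_add)
  have c2: "cauchy (\<lambda>n. s n + t n)" using assms by (rule cauchy_add)
  show ?thesis unfolding qp_add_def using cl_eq_iff[OF c c2] e by simp
qed

lemma mult_cl[simp]: assumes "cauchy s" "cauchy t" shows "qp_mult p (cl s) (cl t) = cl (\<lambda>n. s n * t n)"
proof -
  have e: "equiv (\<lambda>n. qp_rep (cl s) n * qp_rep (cl t) n) (\<lambda>n. s n * t n)"
    by (rule equiv_mult[OF rep_cl(1)[OF assms(1)] assms(2) equiv_sym[OF rep_cl(2)[OF assms(1)]] equiv_sym[OF rep_cl(2)[OF assms(2)]]])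
  have c: "cauchy (\<lambda>n. qp_rep (cl s) n * qp_rep (cl t) n)"
    using rep_cl(1)[OF assms(1)] rep_cl(1)[OF assms(2)] by (rule cauchy_mult)
  have c2: "cauchy (\<lambda>n. s n * t n)" using assms by (rule cauchy_mult)
  show ?thesis unfolding qp_mult_def using cl_eq_iff[OF c c2] e by simp
qed

lemma of_rat_cl: "qp_of_rat p r = cl (\<lambda>_. r)" unfolding qp_of_rat_def ..

lemma add_Qp[simp]: assumes "x \<in> Qp p" "y \<in> Qp p" shows "qp_add p x y \<in> Qp p"
proof -
  obtain s where s: "cauchy s" "x = cl s" using assms(1) Qp_E by blast
  obtain t where t: "cauchy t" "y = cl t" using assms(2) Qp_E by blast
  show ?thesis unfolding s(2) t(2) add_cl[OF s(1) t(1)] using s(1) t(1) by (intro cl_in_Qp cauchy_add)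
qed
lemma mult_Qp[simp]: assumes "x \<in> Qp p" "y \<in> Qp p" shows "qp_mult p x y \<in> Qp p"
proof -
  obtain s where s: "cauchy s" "x = cl s" using assms(1) Qp_E by blast
  obtain t where t: "cauchy t" "y = cl t" using assms(2) Qp_E by blast
  show ?thesis unfolding s(2) t(2) mult_cl[OF s(1) t(1)] using s(1) t(1) by (intro cl_in_Qp cauchy_mult)
qed
lemma of_rat_Qp[simp]: "qp_of_rat p r \<in> Qp p" unfolding of_rat_cl by (rule cl_in_Qp) simp

lemma cl_cong: "(\<And>n. s n = t n) \<Longrightarrow> cl s = cl t" by (metis ext)

lemma of_rat_inj: "qp_of_rat p a = qp_of_rat p b \<longleftrightarrow> a = b"
proof
  assume "qp_of_rat p a = qp_of_rat p b"
  hence "equiv (\<lambda>_. a) (\<lambda>_. b)" unfolding of_rat_cl using cl_eq_iff[of "\<lambda>_. a" "\<lambda>_. b"] by simp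
  hence h: "\<forall>e>0. pa (a - b) < e" unfolding p_equiv_def by auto
  show "a = b"
  proof (rule ccontr)
    assume "a \<noteq> b" hence "pa (a - b) > 0" by simp
    thus False using h less_irrefl by blast
  qed
qed simp

end


context padic begin

lemma pa_diff_abs: "\<bar>pa a - pa b\<bar> \<le> pa (a - b)"
proof -
  have "pa a \<le> max (pa (a - b)) (pa b)" using pa_ultra[of "a - b" b] by simp
  moreover have "pa b \<le> max (pa (b - a)) (pa a)" using pa_ultra[of "b - a" a] by simp
  moreover have "pa (b - a) = pa (a - b)" by (rule pa_sym)
  moreover have "pa a \<ge> 0" "pa b \<ge> 0" "pa (a - b) \<ge> 0" by auto
  moreover have "max u v \<le> u + v" if "u \<ge> 0" "v \<ge> 0" for u v :: real using that by simp
  ultimately have "pa a \<le> pa (a - b) + pa b" "pa b \<le> pa (a - b) + pa a" by (metis order_trans)+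
  thus ?thesis by linarith
qed

lemma cauchy_dich: assumes "cauchy s"
  shows "(\<forall>e>0. \<exists>N. \<forall>n\<ge>N. pa (s n) < e) \<or> (\<exists>N r. r > 0 \<and> (\<forall>n\<ge>N. pa (s n) = r))"
proof (cases "\<forall>e>0. \<exists>N. \<forall>n\<ge>N. pa (s n) < e")
  case True thus ?thesis by (rule disjI1)
next
  case False
  then obtain e where e: "e > 0" "\<forall>N. \<exists>n\<ge>N. \<not> pa (s n) < e" by blast
  obtain N where N: "\<forall>m\<ge>N. \<forall>n\<ge>N. pa (s m - s n) < e" using assms e(1) unfolding p_cauchy_def by blast
  obtain n0 where n0: "n0 \<ge> N" "\<not> pa (s n0) < e" using e(2) by blast
  have "\<exists>N r. r > 0 \<and> (\<forall>n\<ge>N. pa (s n) = r)"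
  proof (intro exI conjI allI impI)
    show "pa (s n0) > 0" using n0(2) e(1) by linarith
    fix n assume n: "n \<ge> N"
    have "pa (s n - s n0) < pa (s n0)" using N n n0 by force
    hence "pa (s n0 + (s n - s n0)) = pa (s n0)" by (rule pa_strict)
    thus "pa (s n) = pa (s n0)" by simp
  qed
  thus ?thesis by (rule disjI2)
qed

lemma cauchy_pa_conv: assumes "cauchy s" shows "\<exists>r. (\<lambda>n. pa (s n)) \<longlonglongrightarrow> r"
  using cauchy_dich[OF assms]
proof
  assume h: "\<forall>e>0. \<exists>N. \<forall>n\<ge>N. pa (s n) < e"
  have "(\<lambda>n. pa (s n)) \<longlonglongrightarrow> 0" unfolding LIMSEQ_iff using h by simp
  thus ?thesis by blast
next
  assume "\<exists>N r. r > 0 \<and> (\<forall>n\<ge>N. pa (s n) = r)"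
  then obtain N r where h: "\<forall>n\<ge>N. pa (s n) = r" by blast
  have "(\<lambda>n. pa (s n)) \<longlonglongrightarrow> r" unfolding LIMSEQ_iff using h by (metis abs_zero diff_self real_norm_def)
  thus ?thesis by blast
qed

definition qabs :: "qp \<Rightarrow> real" where "qabs x = lim (\<lambda>n. pa (qp_rep x n))"

lemma qabs_cl: assumes "cauchy s" shows "(\<lambda>n. pa (s n)) \<longlonglongrightarrow> qabs (cl s)"
proof -
  define t where "t = qp_rep (cl s)"
  have t: "cauchy t" "equiv s t" unfolding t_def using rep_cl[OF assms] by auto
  obtain r where r: "(\<lambda>n. pa (t n)) \<longlonglongrightarrow> r" using cauchy_pa_conv[OF t(1)] by blast
  have q: "qabs (cl s) = r" unfolding qabs_def t_def[symmetric] using r by (rule limI)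
  have "(\<lambda>n. pa (s n)) \<longlonglongrightarrow> r" unfolding LIMSEQ_iff real_norm_def
  proof (intro allI impI)
    fix e :: real assume e: "e > 0"
    obtain N1 where N1: "\<forall>n\<ge>N1. \<bar>pa (t n) - r\<bar> < e / 2"
      using r e unfolding LIMSEQ_iff real_norm_def by (meson half_gt_zero)
    obtain N2 where N2: "\<forall>n\<ge>N2. pa (s n - t n) < e / 2" using t(2) e unfolding p_equiv_def
      by (meson half_gt_zero)
    show "\<exists>N. \<forall>n\<ge>N. \<bar>pa (s n) - r\<bar> < e"
    proof (intro exI allI impI)
      fix n assume n: "max N1 N2 \<le> n"
      have "\<bar>pa (s n) - pa (t n)\<bar> \<le> pa (s n - t n)" by (rule pa_diff_abs)
      moreover have "pa (s n - t n) < e / 2" using N2 n by simp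
      moreover have "\<bar>pa (t n) - r\<bar> < e / 2" using N1 n by simp
      ultimately show "\<bar>pa (s n) - r\<bar> < e" by linarith
    qed
  qed
  thus ?thesis unfolding q .
qed

lemma qabs_mult: assumes "x \<in> Qp p" "y \<in> Qp p" shows "qabs (qp_mult p x y) = qabs x * qabs y"
proof -
  obtain s where s: "cauchy s" "x = cl s" using assms(1) Qp_E by blast
  obtain t where t: "cauchy t" "y = cl t" using assms(2) Qp_E by blast
  have st: "cauchy (\<lambda>n. s n * t n)" using s t by simp
  have 1: "(\<lambda>n. pa (s n * t n)) \<longlonglongrightarrow> qabs (cl (\<lambda>n. s n * t n))" by (rule qabs_cl[OF st])
  have 2: "(\<lambda>n. pa (s n * t n)) \<longlonglongrightarrow> qabs x * qabs y"
    unfolding pa_mult s(2) t(2) by (intro tendsto_mult qabs_cl s(1) t(1))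
  show ?thesis unfolding s(2) t(2) mult_cl[OF s(1) t(1)] using LIMSEQ_unique[OF 1 2] s t by simp
qed

lemma qabs_add: assumes "x \<in> Qp p" "y \<in> Qp p" shows "qabs (qp_add p x y) \<le> max (qabs x) (qabs y)"
proof -
  obtain s where s: "cauchy s" "x = cl s" using assms(1) Qp_E by blast
  obtain t where t: "cauchy t" "y = cl t" using assms(2) Qp_E by blast
  have st: "cauchy (\<lambda>n. s n + t n)" using s t by simp
  have 1: "(\<lambda>n. pa (s n + t n)) \<longlonglongrightarrow> qabs (cl (\<lambda>n. s n + t n))" by (rule qabs_cl[OF st])
  have 2: "(\<lambda>n. max (pa (s n)) (pa (t n))) \<longlonglongrightarrow> max (qabs x) (qabs y)"
    unfolding s(2) t(2) by (intro tendsto_max qabs_cl s(1) t(1))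
  have "qabs (cl (\<lambda>n. s n + t n)) \<le> max (qabs x) (qabs y)"
    using 1 2 by (rule LIMSEQ_le) (use pa_ultra in blast)
  thus ?thesis unfolding s(2) t(2) add_cl[OF s(1) t(1)] using s t by simp
qed

lemma qabs_of_rat[simp]: "qabs (qp_of_rat p r) = pa r"
proof -
  have "(\<lambda>n. pa r) \<longlonglongrightarrow> qabs (qp_of_rat p r)" unfolding of_rat_cl by (rule qabs_cl) simp
  thus ?thesis using LIMSEQ_unique tendsto_const by blast
qed

lemma qabs_nonneg: assumes "x \<in> Qp p" shows "qabs x \<ge> 0"
proof -
  obtain s where s: "cauchy s" "x = cl s" using assms(1) Qp_E by blast
  show ?thesis unfolding s(2) using qabs_cl[OF s(1)] by (rule LIMSEQ_le_const) simp
qed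

lemma qabs_zero: assumes "x \<in> Qp p" shows "qabs x = 0 \<longleftrightarrow> x = qp_of_rat p 0"
proof
  assume "x = qp_of_rat p 0" thus "qabs x = 0" by simp
next
  assume q: "qabs x = 0"
  obtain s where s: "cauchy s" "x = cl s" using assms(1) Qp_E by blast
  have "(\<lambda>n. pa (s n)) \<longlonglongrightarrow> 0" using qabs_cl[OF s(1)] q s(2) by simp
  hence "equiv s (\<lambda>_. 0)" unfolding p_equiv_def LIMSEQ_iff by simp
  hence "cl s = cl (\<lambda>_. 0)" using cl_eq_iff[OF s(1)] by simp
  thus "x = qp_of_rat p 0" unfolding s(2) of_rat_cl .
qed

lemma Zp_sub: "Zp p \<subseteq> Qp p" unfolding Zp_def by auto

lemma Zp_iff: "x \<in> Zp p \<longleftrightarrow> x \<in> Qp p \<and> qabs x \<le> 1"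
proof
  assume x: "x \<in> Zp p"
  then obtain s where s: "s \<in> x" "\<forall>n. pa (s n) \<le> 1" and xq: "x \<in> Qp p" unfolding Zp_def by blast
  obtain t where t: "cauchy t" "x = cl t" using xq Qp_E by blast
  have cs: "cauchy s" "equiv t s" using s(1) unfolding t(2) qp_class_def by auto
  have "x = cl s" unfolding t(2) using cl_eq_iff[OF t(1) cs(1)] cs(2) by simp
  hence "(\<lambda>n. pa (s n)) \<longlonglongrightarrow> qabs x" using qabs_cl[OF cs(1)] by simp
  hence "qabs x \<le> 1" by (rule LIMSEQ_le_const2) (use s(2) in simp)
  thus "x \<in> Qp p \<and> qabs x \<le> 1" using xq by simp
next
  assume h: "x \<in> Qp p \<and> qabs x \<le> 1"
  obtain s where s: "cauchy s" "x = cl s" using h Qp_E by blast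
  have lim: "(\<lambda>n. pa (s n)) \<longlonglongrightarrow> qabs x" using qabs_cl[OF s(1)] s(2) by simp
  have "\<exists>N. \<forall>n\<ge>N. pa (s n) \<le> 1"
    using cauchy_dich[OF s(1)]
  proof
    assume "\<forall>e>0. \<exists>N. \<forall>n\<ge>N. pa (s n) < e"
    then obtain N where "\<forall>n\<ge>N. pa (s n) < 1" by (meson zero_less_one)
    thus ?thesis by (meson less_imp_le)
  next
    assume "\<exists>N r. r > 0 \<and> (\<forall>n\<ge>N. pa (s n) = r)"
    then obtain N r where Nr: "\<forall>n\<ge>N. pa (s n) = r" by blast
    have "(\<lambda>n. pa (s (n + N))) \<longlonglongrightarrow> r" using Nr by simp
    moreover have "(\<lambda>n. pa (s (n + N))) \<longlonglongrightarrow> qabs x" using lim by (rule LIMSEQ_ignore_initial_segment)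
    ultimately have "r = qabs x" using LIMSEQ_unique by blast
    thus ?thesis using Nr h by (intro exI[of _ N]) auto
  qed
  then obtain N where N: "\<forall>n\<ge>N. pa (s n) \<le> 1" by blast
  define t where "t n = (if n < N then 0 else s n)" for n
  have e: "equiv s t" unfolding p_equiv_def t_def by (auto intro!: exI[of _ N])
  have ct: "cauchy t" by (rule equiv_cauchy[OF e s(1)])
  have tx: "t \<in> x" unfolding s(2) qp_class_def using ct e by simp
  have "\<forall>n. pa (t n) \<le> 1" unfolding t_def using N by simp
  thus "x \<in> Zp p" unfolding Zp_def using tx h by blast
qed

lemma of_rat_Zp: "pa r \<le> 1 \<Longrightarrow> qp_of_rat p r \<in> Zp p" by (simp add: Zp_iff)

lemma add_Zp: assumes "x \<in> Zp p" "y \<in> Zp p" shows "qp_add p x y \<in> Zp p"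
proof -
  have "qabs (qp_add p x y) \<le> max (qabs x) (qabs y)" using assms Zp_iff qabs_add by blast
  moreover have "max (qabs x) (qabs y) \<le> 1" using assms unfolding Zp_iff by simp
  ultimately have "qabs (qp_add p x y) \<le> 1" by (rule order_trans)
  thus ?thesis using assms unfolding Zp_iff by simp
qed

lemma mult_Zp: assumes "x \<in> Zp p" "y \<in> Zp p" shows "qp_mult p x y \<in> Zp p"
proof -
  have h: "qabs (qp_mult p x y) = qabs x * qabs y" using assms Zp_iff qabs_mult by blast
  have "qabs x * qabs y \<le> 1 * 1" using assms unfolding Zp_iff
    by (intro mult_mono) (auto intro: qabs_nonneg)
  thus ?thesis using assms h unfolding Zp_iff by simp
qed

end


context padic begin

abbreviation A where "A \<equiv> qp_add p"
abbreviation M where "M \<equiv> qp_mult p"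
abbreviation R where "R \<equiv> qp_of_rat p"

lemma cauchy_minus: assumes "cauchy s" shows "cauchy (\<lambda>n. - s n)"
proof -
  have "cauchy (\<lambda>n. (-1) * s n)" using assms by (intro cauchy_mult) auto
  thus ?thesis by simp
qed

lemma cauchy_diff: assumes "cauchy s" "cauchy t" shows "cauchy (\<lambda>n. s n - t n)"
proof -
  have "cauchy (\<lambda>n. s n + (- t n))" using assms by (intro cauchy_add cauchy_minus)
  thus ?thesis by simp
qed

lemmas cl_simps = of_rat_cl add_cl mult_cl cauchy_add cauchy_mult cauchy_const cauchy_minus cauchy_diff

lemma I1: assumes "a \<in> Qp p" "b \<in> Qp p" shows "A (M a (R 0)) (M b (R 1)) = b"
proof -
  obtain s where s: "cauchy s" "a = cl s" using assms(1) Qp_E by blast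
  obtain t where t: "cauchy t" "b = cl t" using assms(2) Qp_E by blast
  show ?thesis unfolding s(2) t(2) using s(1) t(1) by (simp add: cl_simps)
qed

lemma I2: assumes "a \<in> Qp p" shows "M a (R (x * y)) = M (M a (R x)) (R y)"
proof -
  obtain s where s: "cauchy s" "a = cl s" using assms(1) Qp_E by blast
  show ?thesis unfolding s(2) using s(1) by (simp add: cl_simps mult.assoc)
qed

lemma I4: assumes "w \<in> Qp p" "x \<in> Qp p" shows "A w (M (R 0) x) = w"
proof -
  obtain s where s: "cauchy s" "w = cl s" using assms(1) Qp_E by blast
  obtain t where t: "cauchy t" "x = cl t" using assms(2) Qp_E by blast
  show ?thesis unfolding s(2) t(2) using s(1) t(1) by (simp add: cl_simps)
qed

lemma I3: assumes "x \<in> Qp p" shows "A (M (R 1) (R a)) (M (R 0) x) = R a"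
proof -
  obtain t where t: "cauchy t" "x = cl t" using assms(1) Qp_E by blast
  show ?thesis unfolding t(2) using t(1) by (simp add: cl_simps)
qed

lemma I5: assumes "a \<in> Qp p" "b \<in> Qp p" "x \<in> Qp p"
  shows "M (R c) (A (M a (R r)) (M b x)) = A (M a (R (c * r))) (M (M (R c) b) x)"
proof -
  obtain s where s: "cauchy s" "a = cl s" using assms(1) Qp_E by blast
  obtain t where t: "cauchy t" "b = cl t" using assms(2) Qp_E by blast
  obtain u where u: "cauchy u" "x = cl u" using assms(3) Qp_E by blast
  show ?thesis unfolding s(2) t(2) u(2) using s(1) t(1) u(1) by (simp add: cl_simps algebra_simps)
qed

lemma I6: assumes "w \<in> Qp p" "x \<in> Qp p" shows "A (M (R 0) w) (M (R 1) x) = x"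
proof -
  obtain s where s: "cauchy s" "w = cl s" using assms(1) Qp_E by blast
  obtain t where t: "cauchy t" "x = cl t" using assms(2) Qp_E by blast
  show ?thesis unfolding s(2) t(2) using s(1) t(1) by (simp add: cl_simps)
qed

lemma I7: assumes "x \<in> Qp p" shows "A (M (R a) (R 1)) (M (R (-1)) (M (R 0) x)) = R a"
proof -
  obtain t where t: "cauchy t" "x = cl t" using assms(1) Qp_E by blast
  show ?thesis unfolding t(2) using t(1) by (simp add: cl_simps)
qed

lemma I8: assumes "x \<in> Qp p" shows "M (R 1) x = x"
proof -
  obtain t where t: "cauchy t" "x = cl t" using assms(1) Qp_E by blast
  show ?thesis unfolding t(2) using t(1) by (simp add: cl_simps)
qed

lemma I9: assumes "c \<in> Qp p" "a \<in> Qp p" "b \<in> Qp p" "w \<in> Qp p" "y \<in> Qp p"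
  shows "A (M c (A (M a w) (M b y))) (M (R (-1)) y) = A (M (M c a) w) (M (A (M c b) (R (-1))) y)"
proof -
  obtain s1 where s1: "cauchy s1" "c = cl s1" using assms(1) Qp_E by blast
  obtain s2 where s2: "cauchy s2" "a = cl s2" using assms(2) Qp_E by blast
  obtain s3 where s3: "cauchy s3" "b = cl s3" using assms(3) Qp_E by blast
  obtain s4 where s4: "cauchy s4" "w = cl s4" using assms(4) Qp_E by blast
  obtain s5 where s5: "cauchy s5" "y = cl s5" using assms(5) Qp_E by blast
  show ?thesis unfolding s1(2) s2(2) s3(2) s4(2) s5(2) using s1(1) s2(1) s3(1) s4(1) s5(1)
    by (simp add: cl_simps) (rule cl_cong, simp add: algebra_simps)
qed

lemma I10: "A (R a) (R b) = R (a + b)" by (simp add: cl_simps)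
lemma I11: "M (R a) (R b) = R (a * b)" by (simp add: cl_simps)

lemma L1: assumes "u \<in> Qp p" "v \<in> Qp p"
  shows "A (M (R a) (A (M (R b) u) (M (R c) v))) (M (R d) (A (M (R e) u) (M (R f) v)))
       = A (M (R (a * b + d * e)) u) (M (R (a * c + d * f)) v)"
proof -
  obtain s where s: "cauchy s" "u = cl s" using assms(1) Qp_E by blast
  obtain t where t: "cauchy t" "v = cl t" using assms(2) Qp_E by blast
  show ?thesis unfolding s(2) t(2) using s(1) t(1) by (simp add: cl_simps algebra_simps)
qed

lemma L2: assumes "u \<in> Qp p" "v \<in> Qp p"
  shows "A (M (R 1) u) (M (R 0) v) = u" "A (M (R 0) u) (M (R 1) v) = v"
proof -
  obtain s where s: "cauchy s" "u = cl s" using assms(1) Qp_E by blast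
  obtain t where t: "cauchy t" "v = cl t" using assms(2) Qp_E by blast
  show "A (M (R 1) u) (M (R 0) v) = u" unfolding s(2) t(2) using s(1) t(1) by (simp add: cl_simps)
  show "A (M (R 0) u) (M (R 1) v) = v" unfolding s(2) t(2) using s(1) t(1) by (simp add: cl_simps)
qed

end


context padic begin

definition latt :: "qp \<Rightarrow> qp \<Rightarrow> qp \<Rightarrow> qp \<Rightarrow> lattice" where
  "latt a b c d = {(A (M x a) (M y c), A (M x b) (M y d)) | x y. x \<in> Zp p \<and> y \<in> Zp p}"

definition pii :: "int \<Rightarrow> qp" where "pii i = R ((of_nat p) powi i)"

definition Lx :: "int \<Rightarrow> qp \<Rightarrow> lattice" where "Lx i x = latt (pii i) (R 0) x (R 1)"

definition V :: "int \<Rightarrow> qp \<Rightarrow> vertex" where "V i x = homothety_class p (Lx i x)"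

lemma pii_Qp[simp]: "pii i \<in> Qp p" unfolding pii_def by simp

lemma qabs_pii: "qabs (pii i) = real p powr (- real_of_int i)"
  unfolding pii_def qabs_of_rat by (rule pa_powi)

lemma pii_succ: "pii (i + 1) = R (of_nat p * (of_nat p) powi i)"
proof -
  have "(of_nat p :: rat) powi (i + 1) = (of_nat p) powi i * of_nat p"
    using p_gt1 by (intro power_int_add_1) simp
  thus ?thesis unfolding pii_def by (simp add: mult.commute)
qed

lemma Zp_Qp: "x \<in> Zp p \<Longrightarrow> x \<in> Qp p" using Zp_sub by blast

lemma R0_Zp[simp]: "R 0 \<in> Zp p" by (rule of_rat_Zp) simp
lemma R1_Zp[simp]: "R 1 \<in> Zp p" by (rule of_rat_Zp) simp
lemma Rp_Zp[simp]: "R (of_nat p) \<in> Zp p"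
  by (rule of_rat_Zp) (use p_real_gt1 pa_p in simp)

lemma qabs_Zp: "x \<in> Zp p \<Longrightarrow> qabs x \<le> 1" by (simp add: Zp_iff)

lemma Lx_mem: assumes "x \<in> Qp p"
  shows "z \<in> Lx i x \<longleftrightarrow> (\<exists>a b. a \<in> Zp p \<and> b \<in> Zp p \<and> z = (A (M a (pii i)) (M b x), b))"
proof
  assume "z \<in> Lx i x"
  then obtain a b where ab: "a \<in> Zp p" "b \<in> Zp p" "z = (A (M a (pii i)) (M b x), A (M a (R 0)) (M b (R 1)))"
    unfolding Lx_def latt_def by blast
  have "A (M a (R 0)) (M b (R 1)) = b" using ab by (intro I1) (auto intro: Zp_Qp)
  thus "\<exists>a b. a \<in> Zp p \<and> b \<in> Zp p \<and> z = (A (M a (pii i)) (M b x), b)" using ab by auto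
next
  assume "\<exists>a b. a \<in> Zp p \<and> b \<in> Zp p \<and> z = (A (M a (pii i)) (M b x), b)"
  then obtain a b where ab: "a \<in> Zp p" "b \<in> Zp p" "z = (A (M a (pii i)) (M b x), b)" by blast
  have "A (M a (R 0)) (M b (R 1)) = b" using ab by (intro I1) (auto intro: Zp_Qp)
  hence "z = (A (M a (pii i)) (M b x), A (M a (R 0)) (M b (R 1)))" using ab by simp
  thus "z \<in> Lx i x" unfolding Lx_def latt_def using ab by blast
qed

lemma Lx_Qp: assumes "x \<in> Qp p" "z \<in> Lx i x" shows "fst z \<in> Qp p" "snd z \<in> Qp p"
  using assms Lx_mem[OF assms(1)] by (auto simp: Zp_Qp)

lemma scale_mem: "z \<in> scale_lattice p c L \<longleftrightarrow> (\<exists>u v. (u, v) \<in> L \<and> z = (M c u, M c v))"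
  unfolding scale_lattice_def by auto

lemma R_ne: "a \<noteq> b \<Longrightarrow> R a \<noteq> R b" using of_rat_inj by blast

lemma scale_one: assumes "\<And>z. z \<in> L \<Longrightarrow> fst z \<in> Qp p \<and> snd z \<in> Qp p"
  shows "scale_lattice p (R 1) L = L"
proof -
  have "(\<lambda>(u, v). (M (R 1) u, M (R 1) v)) z = z" if "z \<in> L" for z
    using assms[OF that] by (cases z) (simp add: I8)
  hence "scale_lattice p (R 1) L = (\<lambda>z. z) ` L" unfolding scale_lattice_def
    by (intro image_cong) auto
  thus ?thesis by simp
qed

lemma Lx_in_V: assumes "x \<in> Qp p" shows "Lx i x \<in> V i x"
proof -
  have "scale_lattice p (R 1) (Lx i x) = Lx i x" using Lx_Qp[OF assms] by (intro scale_one) auto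
  moreover have "R 1 \<in> Qp p" "R 1 \<noteq> R 0" using R_ne by auto
  ultimately show ?thesis unfolding V_def homothety_class_def by force
qed

lemma Lx_lattice: assumes "x \<in> Qp p" shows "is_lattice p (Lx i x)"
proof -
  have "A (M (pii i) (R 1)) (M (R (-1)) (M (R 0) x)) = pii i" unfolding pii_def using assms by (rule I7)
  moreover have "pii i \<noteq> R 0" unfolding pii_def using p_gt1 by (intro R_ne) simp
  ultimately show ?thesis unfolding is_lattice_def Lx_def latt_def using assms
    by (intro exI[of _ "pii i"] exI[of _ "R 0"] exI[of _ x] exI[of _ "R 1"]) simp
qed

lemma V_vertex: "x \<in> Qp p \<Longrightarrow> V i x \<in> bt_vertices p"
  unfolding bt_vertices_def V_def using Lx_lattice by blast

lemma pii_in: assumes "x \<in> Qp p" shows "(pii i, R 0) \<in> Lx i x"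
proof -
  have "(pii i, R 0) = (A (M (R 1) (pii i)) (M (R 0) x), R 0)" unfolding pii_def using I3[OF assms] by simp
  thus ?thesis unfolding Lx_mem[OF assms] using R1_Zp R0_Zp by blast
qed

lemma x1_in: assumes "x \<in> Qp p" shows "(x, R 1) \<in> Lx i x"
proof -
  have "(x, R 1) = (A (M (R 0) (pii i)) (M (R 1) x), R 1)" using I6[OF _ assms, of "pii i"] by simp
  thus ?thesis unfolding Lx_mem[OF assms] using R1_Zp R0_Zp by blast
qed

lemma Lx_succ_sub: assumes "x \<in> Qp p" shows "Lx (i + 1) x \<subseteq> Lx i x"
proof
  fix z assume "z \<in> Lx (i + 1) x"
  then obtain a b where ab: "a \<in> Zp p" "b \<in> Zp p" "z = (A (M a (pii (i + 1))) (M b x), b)"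
    unfolding Lx_mem[OF assms] by blast
  have "M a (pii (i + 1)) = M (M a (R (of_nat p))) (pii i)"
    unfolding pii_succ unfolding pii_def using ab(1) by (intro I2 Zp_Qp)
  moreover have "M a (R (of_nat p)) \<in> Zp p" using ab(1) by (intro mult_Zp) auto
  ultimately show "z \<in> Lx i x" unfolding Lx_mem[OF assms] using ab by auto
qed

lemma pii_strict: "real p powr (- real_of_int (i + 1)) < real p powr (- real_of_int i)"
  using p_real_gt1 by simp

lemma pii_not_in: assumes "x \<in> Qp p" shows "(pii i, R 0) \<notin> Lx (i + 1) x"
proof
  assume "(pii i, R 0) \<in> Lx (i + 1) x"
  then obtain a b where ab: "a \<in> Zp p" "b \<in> Zp p" "(pii i, R 0) = (A (M a (pii (i + 1))) (M b x), b)"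
    unfolding Lx_mem[OF assms] by blast
  hence b: "b = R 0" by simp
  have "pii i = A (M a (pii (i + 1))) (M (R 0) x)" using ab(3) b by simp
  also have "\<dots> = M a (pii (i + 1))" using ab(1) assms by (intro I4) (auto simp: Zp_Qp)
  finally have "qabs (pii i) = qabs a * qabs (pii (i + 1))" using ab(1) by (simp add: qabs_mult Zp_Qp)
  hence "real p powr (- real_of_int i) = qabs a * real p powr (- real_of_int (i + 1))"
    unfolding qabs_pii .
  moreover have "qabs a * real p powr (- real_of_int (i + 1)) \<le> 1 * real p powr (- real_of_int (i + 1))"
    using qabs_Zp[OF ab(1)] by (intro mult_right_mono) auto
  ultimately show False using pii_strict[of i] by simp
qed

lemma scale_sub: assumes "x \<in> Qp p" shows "scale_lattice p (R (of_nat p)) (Lx i x) \<subseteq> Lx (i + 1) x"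
proof
  fix z assume "z \<in> scale_lattice p (R (of_nat p)) (Lx i x)"
  then obtain u v where uv: "(u, v) \<in> Lx i x" "z = (M (R (of_nat p)) u, M (R (of_nat p)) v)"
    unfolding scale_mem by blast
  then obtain a b where ab: "a \<in> Zp p" "b \<in> Zp p" "u = A (M a (pii i)) (M b x)" "v = b"
    unfolding Lx_mem[OF assms] by blast
  have "M (R (of_nat p)) u = A (M a (pii (i + 1))) (M (M (R (of_nat p)) b) x)"
    unfolding ab(3) pii_succ unfolding pii_def using ab assms by (intro I5) (auto intro: Zp_Qp)
  moreover have "M (R (of_nat p)) b \<in> Zp p" using ab(2) by (intro mult_Zp) auto
  ultimately show "z \<in> Lx (i + 1) x" unfolding Lx_mem[OF assms] uv(2) ab(4) using ab(1) by blast
qed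

lemma x1_not: assumes "x \<in> Qp p" shows "(x, R 1) \<notin> scale_lattice p (R (of_nat p)) (Lx i x)"
proof
  assume "(x, R 1) \<in> scale_lattice p (R (of_nat p)) (Lx i x)"
  then obtain u v where uv: "(u, v) \<in> Lx i x" "(x, R 1) = (M (R (of_nat p)) u, M (R (of_nat p)) v)"
    unfolding scale_mem by blast
  then obtain a b where ab: "a \<in> Zp p" "b \<in> Zp p" "v = b"
    unfolding Lx_mem[OF assms] by blast
  have "R 1 = M (R (of_nat p)) b" using uv ab by simp
  hence "qabs (R 1) = qabs (R (of_nat p)) * qabs b" using ab(2) by (simp add: qabs_mult Zp_Qp)
  hence "1 = (1 / real p) * qabs b" by (simp add: pa_p)
  moreover have "(1 / real p) * qabs b \<le> (1 / real p) * 1" using qabs_Zp[OF ab(2)] by (intro mult_left_mono) auto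
  ultimately show False using p_real_gt1 by simp
qed

lemma V_adj: assumes "x \<in> Qp p" shows "bt_adj p (V i x) (V (i + 1) x)"
  unfolding bt_adj_def
proof (intro conjI V_vertex assms bexI)
  show "Lx (i + 1) x \<subset> Lx i x" using Lx_succ_sub[OF assms] pii_in[OF assms] pii_not_in[OF assms] by blast
  show "scale_lattice p (R (of_nat p)) (Lx i x) \<subset> Lx (i + 1) x"
    using scale_sub[OF assms] x1_in[OF assms] x1_not[OF assms] by blast
  show "Lx i x \<in> V i x" "Lx (i + 1) x \<in> V (i + 1) x" using Lx_in_V assms by auto
qed

end


context padic begin

lemma qabs_pos: assumes "c \<in> Qp p" "c \<noteq> R 0" shows "qabs c > 0"
  using qabs_nonneg[OF assms(1)] qabs_zero[OF assms(1)] assms(2) by linarith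

lemma zero_from_qabs: assumes "b \<in> Qp p" "c \<in> Qp p" "c \<noteq> R 0" "R 0 = M c b" shows "b = R 0"
proof -
  have "qabs (R 0) = qabs c * qabs b" unfolding assms(4) using assms by (simp add: qabs_mult)
  hence "qabs c * qabs b = 0" by simp
  hence "qabs b = 0" using qabs_pos[OF assms(2,3)] by simp
  thus ?thesis using qabs_zero[OF assms(1)] by simp
qed

lemma V_eq: assumes x: "x \<in> Qp p" and y: "y \<in> Qp p" and eq: "V i x = V j y"
  shows "i = j \<and> qabs (A x (M (R (-1)) y)) \<le> real p powr (- real_of_int i)"
proof -
  have "Lx i x \<in> homothety_class p (Lx j y)" using Lx_in_V[OF x, of i] eq unfolding V_def by simp
  then obtain c where c: "c \<in> Qp p" "c \<noteq> R 0" "Lx i x = scale_lattice p c (Lx j y)"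
    unfolding homothety_class_def by blast
  have qc: "qabs c > 0" using qabs_pos c by blast
  note Ly = Lx_mem[OF y] and Lxm = Lx_mem[OF x]
  define P where "P k = real p powr (- real_of_int k)" for k
  have Ppos: "P k > 0" for k unfolding P_def using p_gt1 by simp
  have a: "P i \<le> qabs c * P j"
  proof -
    have "(pii i, R 0) \<in> scale_lattice p c (Lx j y)" using pii_in[OF x, of i] unfolding c(3) .
    then obtain u v where uv: "(u, v) \<in> Lx j y" "(pii i, R 0) = (M c u, M c v)" unfolding scale_mem by blast
    then obtain a b where ab: "a \<in> Zp p" "b \<in> Zp p" "u = A (M a (pii j)) (M b y)" "v = b"
      unfolding Ly by blast
    have b0: "b = R 0" using uv(2) ab c by (intro zero_from_qabs) (auto simp: Zp_Qp)
    have "u = M a (pii j)" unfolding ab(3) b0 using ab(1) y by (intro I4) (auto simp: Zp_Qp)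
    hence "pii i = M c (M a (pii j))" using uv(2) by simp
    hence "qabs (pii i) = qabs (M c (M a (pii j)))" by (rule arg_cong)
    hence "qabs (pii i) = qabs c * (qabs a * qabs (pii j))" using c(1) ab(1) by (simp add: qabs_mult Zp_Qp)
    hence "P i = qabs c * (qabs a * P j)" unfolding P_def qabs_pii .
    moreover have "qabs a * P j \<le> 1 * P j" using qabs_Zp[OF ab(1)] Ppos[of j] by (intro mult_right_mono) auto
    ultimately show ?thesis using qc by (simp add: mult_left_mono)
  qed
  have b: "qabs c * P j \<le> P i"
  proof -
    have "(M c (pii j), M c (R 0)) \<in> scale_lattice p c (Lx j y)" unfolding scale_mem using pii_in[OF y] by blast
    hence "(M c (pii j), M c (R 0)) \<in> Lx i x" unfolding c(3) .
    then obtain a b where ab: "a \<in> Zp p" "b \<in> Zp p" "(M c (pii j), M c (R 0)) = (A (M a (pii i)) (M b x), b)"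
      unfolding Lxm by blast
    have "b = M c (R 0)" using ab(3) by simp
    hence "qabs b = qabs c * qabs (R 0)" using c by (simp add: qabs_mult)
    hence "qabs b = 0" by simp
    hence b0: "b = R 0" using qabs_zero ab(2) Zp_Qp by blast
    have "M c (pii j) = A (M a (pii i)) (M (R 0) x)" using ab(3) b0 by simp
    also have "\<dots> = M a (pii i)" using ab(1) x by (intro I4) (auto simp: Zp_Qp)
    finally have E: "M c (pii j) = M a (pii i)" .
    have "qabs (M c (pii j)) = qabs (M a (pii i))" using E by (rule arg_cong)
    hence "qabs c * qabs (pii j) = qabs a * qabs (pii i)" using c(1) ab(1) by (simp add: qabs_mult Zp_Qp)
    hence "qabs c * P j = qabs a * P i" unfolding P_def qabs_pii .
    moreover have "qabs a * P i \<le> 1 * P i" using qabs_Zp[OF ab(1)] Ppos[of i] by (intro mult_right_mono) auto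
    ultimately show ?thesis by simp
  qed
  have "(x, R 1) \<in> scale_lattice p c (Lx j y)" using x1_in[OF x, of i] unfolding c(3) .
  then obtain u v where uv: "(u, v) \<in> Lx j y" "(x, R 1) = (M c u, M c v)" unfolding scale_mem by blast
  then obtain a b where ab: "a \<in> Zp p" "b \<in> Zp p" "u = A (M a (pii j)) (M b y)" "v = b"
    unfolding Ly by blast
  have cb: "M c b = R 1" using uv(2) ab(4) by simp
  have c1: "1 \<le> qabs c"
  proof -
    have "qabs (R 1) = qabs c * qabs b" unfolding cb[symmetric] using c ab by (simp add: qabs_mult Zp_Qp)
    hence "1 = qabs c * qabs b" by simp
    moreover have "qabs c * qabs b \<le> qabs c * 1" using qabs_Zp[OF ab(2)] qc by (intro mult_left_mono) auto
    ultimately show ?thesis by simp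
  qed
  have c2: "qabs c \<le> 1"
  proof -
    have "(M c y, M c (R 1)) \<in> scale_lattice p c (Lx j y)" unfolding scale_mem using x1_in[OF y] by blast
    hence "(M c y, M c (R 1)) \<in> Lx i x" unfolding c(3) .
    then obtain a' b' where ab': "a' \<in> Zp p" "b' \<in> Zp p" "(M c y, M c (R 1)) = (A (M a' (pii i)) (M b' x), b')"
      unfolding Lxm by blast
    have "b' = M c (R 1)" using ab'(3) by simp
    hence "qabs b' = qabs c * qabs (R 1)" using c by (simp add: qabs_mult)
    thus ?thesis using qabs_Zp[OF ab'(2)] by simp
  qed
  have qc1: "qabs c = 1" using c1 c2 by simp
  have "P i = P j" using a b qc1 by simp
  hence ij: "i = j" unfolding P_def using p_gt1 powr_inj[of "real p" "- real_of_int i" "- real_of_int j"] by simp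
  have "A x (M (R (-1)) y) = A (M c (A (M a (pii j)) (M b y))) (M (R (-1)) y)" using uv(2) ab(3) by simp
  also have "\<dots> = A (M (M c a) (pii j)) (M (A (M c b) (R (-1))) y)" using c ab y
    by (intro I9) (auto simp: Zp_Qp)
  also have "\<dots> = A (M (M c a) (pii j)) (M (R 0) y)" unfolding cb I10 by simp
  also have "\<dots> = M (M c a) (pii j)" using c ab y by (intro I4) (auto simp: Zp_Qp)
  finally have "qabs (A x (M (R (-1)) y)) = qabs (M (M c a) (pii j))" by (rule arg_cong)
  hence "qabs (A x (M (R (-1)) y)) = qabs c * qabs a * P j" unfolding P_def qabs_pii[symmetric]
    using c(1) ab(1) by (simp add: qabs_mult Zp_Qp)
  also have "\<dots> = qabs a * P j" using qc1 by simp
  also have "\<dots> \<le> 1 * P j" using qabs_Zp[OF ab(1)] Ppos[of j] by (intro mult_right_mono) auto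
  finally show ?thesis using ij unfolding P_def by simp
qed

end


lemma uncountable_nat_bool: "\<not> countable (UNIV :: (nat \<Rightarrow> bool) set)"
proof -
  have "\<not> (\<exists>f :: nat \<Rightarrow> nat \<Rightarrow> bool. range f = UNIV)"
  proof
    assume "\<exists>f :: nat \<Rightarrow> nat \<Rightarrow> bool. range f = UNIV"
    then obtain f :: "nat \<Rightarrow> nat \<Rightarrow> bool" where f: "range f = UNIV" by blast
    have "(\<lambda>n. \<not> f n n) \<in> range f" using f by simp
    then obtain k where "(\<lambda>n. \<not> f n n) = f k" by blast
    hence "(\<not> f k k) = f k k" by (metis)
    thus False by simp
  qed
  thus ?thesis unfolding uncountable_def by simp
qed

context padic begin

lemma pa_pow: "pa ((of_nat p) ^ j) = real p powr (- real j)"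
  using pv_p_power[of j] p_gt1 by (simp add: padic_abs_def)

lemma pa_sum_le: assumes "finite S" "\<And>j. j \<in> S \<Longrightarrow> pa (f j) \<le> B" "B \<ge> 0"
  shows "pa (\<Sum>j\<in>S. f j) \<le> B"
  using assms
proof (induction S rule: finite_induct)
  case empty thus ?case by simp
next
  case (insert a S)
  have "pa (f a + (\<Sum>j\<in>S. f j)) \<le> B" using insert by (intro pa_add_le) auto
  thus ?case using insert by simp
qed

lemma ppowr_le: "m \<le> n \<Longrightarrow> real p powr (- real n) \<le> real p powr (- real m)"
  using p_real_gt1 by simp

lemma ppowr_small: assumes "e > 0" shows "\<exists>N. real p powr (- real N) < e"
proof -
  obtain N where N: "1 / e < real p ^ N" using real_arch_pow[OF p_real_gt1] by blast
  have "real p powr (- real N) = 1 / real p ^ N" using p_gt1 by (simp add: powr_minus_divide powr_realpow)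
  also have "\<dots> < e" using N assms p_gt1 by (simp add: field_simps)
  finally show ?thesis by blast
qed

definition dig :: "(nat \<Rightarrow> bool) \<Rightarrow> nat \<Rightarrow> rat" where
  "dig \<sigma> j = (if \<sigma> j then (of_nat p) ^ j else 0)"

definition D :: "(nat \<Rightarrow> bool) \<Rightarrow> nat \<Rightarrow> rat" where
  "D \<sigma> n = (\<Sum>j<n. dig \<sigma> j)"

lemma pa_dig: "pa (dig \<sigma> j) \<le> real p powr (- real j)"
  unfolding dig_def using pa_pow[of j] p_gt1 by auto

lemma D_diff: assumes "n \<le> m" shows "pa (D \<sigma> m - D \<sigma> n) \<le> real p powr (- real n)"
proof -
  have "{..<m} = {..<n} \<union> {n..<m}" using assms by auto
  hence "D \<sigma> m = D \<sigma> n + (\<Sum>j\<in>{n..<m}. dig \<sigma> j)" unfolding D_def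
    by (simp add: sum.union_disjoint ivl_disj_int(2))
  hence "D \<sigma> m - D \<sigma> n = (\<Sum>j\<in>{n..<m}. dig \<sigma> j)" by simp
  also have "pa \<dots> \<le> real p powr (- real n)"
  proof (rule pa_sum_le)
    fix j assume "j \<in> {n..<m}"
    hence "real p powr (- real j) \<le> real p powr (- real n)" by (intro ppowr_le) simp
    thus "pa (dig \<sigma> j) \<le> real p powr (- real n)" using pa_dig[of \<sigma> j] by linarith
  qed auto
  finally show ?thesis .
qed

lemma D_cauchy: "cauchy (D \<sigma>)"
  unfolding p_cauchy_def
proof (intro allI impI)
  fix e :: real assume "e > 0"
  then obtain N where N: "real p powr (- real N) < e" using ppowr_small by blast
  show "\<exists>N. \<forall>m\<ge>N. \<forall>n\<ge>N. pa (D \<sigma> m - D \<sigma> n) < e"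
  proof (intro exI allI impI)
    fix m n assume mn: "N \<le> m" "N \<le> n"
    show "pa (D \<sigma> m - D \<sigma> n) < e"
    proof (cases "n \<le> m")
      case True
      have "pa (D \<sigma> m - D \<sigma> n) \<le> real p powr (- real n)" using D_diff True by blast
      moreover have "real p powr (- real n) \<le> real p powr (- real N)" using mn by (intro ppowr_le)
      ultimately show ?thesis using N by linarith
    next
      case False
      have "pa (D \<sigma> n - D \<sigma> m) \<le> real p powr (- real m)" using D_diff False by simp
      moreover have "real p powr (- real m) \<le> real p powr (- real N)" using mn by (intro ppowr_le)
      ultimately show ?thesis using N pa_sym[of "D \<sigma> m" "D \<sigma> n"] by linarith
    qed
  qed
qed

definition X :: "(nat \<Rightarrow> bool) \<Rightarrow> qp" where "X \<sigma> = cl (D \<sigma>)"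

lemma X_Qp: "X \<sigma> \<in> Qp p" unfolding X_def using D_cauchy by simp

lemma X_inj: assumes "X \<sigma> = X \<tau>" shows "\<sigma> = \<tau>"
proof (rule ccontr)
  assume ne: "\<sigma> \<noteq> \<tau>"
  then obtain j0 where j0: "\<sigma> j0 \<noteq> \<tau> j0" by blast
  define k where "k = (LEAST j. \<sigma> j \<noteq> \<tau> j)"
  have k: "\<sigma> k \<noteq> \<tau> k" unfolding k_def using j0 by (rule LeastI)
  have before: "\<sigma> j = \<tau> j" if "j < k" for j using not_less_Least[of j "\<lambda>j. \<sigma> j \<noteq> \<tau> j"] that
    unfolding k_def by blast
  define g where "g j = dig \<sigma> j - dig \<tau> j" for j
  have gk: "pa (g k) = real p powr (- real k)"
  proof (cases "\<sigma> k")
    case True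
    hence "g k = (of_nat p) ^ k" using k unfolding g_def dig_def by simp
    thus ?thesis using pa_pow by simp
  next
    case False
    hence "g k = - ((of_nat p) ^ k)" using k unfolding g_def dig_def by simp
    thus ?thesis using pa_pow by simp
  qed
  have gle: "pa (g j) \<le> real p powr (- real j)" for j
  proof -
    have "g j = dig \<sigma> j + (- dig \<tau> j)" unfolding g_def by simp
    moreover have "pa (- dig \<tau> j) \<le> real p powr (- real j)" using pa_dig[of \<tau> j] by simp
    ultimately show ?thesis using pa_add_le[OF pa_dig[of \<sigma> j], of "- dig \<tau> j"] by (simp only:)
  qed
  have Dg: "D \<sigma> n - D \<tau> n = (\<Sum>j<n. g j)" for n unfolding D_def g_def by (simp add: sum_subtractf)
  have main: "pa (\<Sum>j<Suc k + m. g j) = real p powr (- real k)" for m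
  proof (induction m)
    case 0
    have "(\<Sum>j<k. g j) = 0" using before unfolding g_def dig_def by (intro sum.neutral) auto
    thus ?case using gk by simp
  next
    case (Suc m)
    have "pa (g (Suc k + m)) \<le> real p powr (- real (Suc k + m))" by (rule gle)
    also have "\<dots> < real p powr (- real k)" using p_real_gt1 by simp
    finally have "pa ((\<Sum>j<Suc k + m. g j) + g (Suc k + m)) = pa (\<Sum>j<Suc k + m. g j)"
      using Suc by (intro pa_strict) simp
    thus ?case using Suc by simp
  qed
  have "equiv (D \<sigma>) (D \<tau>)" using assms unfolding X_def using cl_eq_iff D_cauchy by blast
  moreover have "real p powr (- real k) > 0" using p_gt1 by simp
  ultimately obtain N where N: "\<forall>n\<ge>N. pa (D \<sigma> n - D \<tau> n) < real p powr (- real k)"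
    unfolding p_equiv_def by blast
  have "pa (D \<sigma> (Suc k + N) - D \<tau> (Suc k + N)) < real p powr (- real k)" using N by simp
  thus False unfolding Dg main by simp
qed

lemma X_Zp: "X \<sigma> \<in> Zp p"
proof -
  have "pa (D \<sigma> n) \<le> 1" for n unfolding D_def
  proof (rule pa_sum_le)
    fix j
    have "real p powr (- real j) \<le> real p powr (- real 0)" by (intro ppowr_le) simp
    thus "pa (dig \<sigma> j) \<le> 1" using pa_dig[of \<sigma> j] p_gt1 by simp
  qed auto
  thus ?thesis unfolding Zp_def X_def using D_cauchy cl_mem by auto
qed

lemma sub_zero: assumes "x \<in> Qp p" "y \<in> Qp p" "A x (M (R (-1)) y) = R 0" shows "x = y"
proof -
  obtain s where s: "cauchy s" "x = cl s" using assms(1) Qp_E by blast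
  obtain t where t: "cauchy t" "y = cl t" using assms(2) Qp_E by blast
  have "cl (\<lambda>n. s n + (-1) * t n) = cl (\<lambda>_. 0)" using assms(3) s t by (simp add: cl_simps)
  hence "equiv (\<lambda>n. s n + (-1) * t n) (\<lambda>_. 0)" using s t by (subst (asm) cl_eq_iff) (auto simp: cl_simps)
  hence "equiv s t" unfolding p_equiv_def by simp
  thus ?thesis using s t cl_eq_iff by simp
qed

definition Ap :: "qp \<Rightarrow> apartment" where "Ap x = range (\<lambda>i. {V i x, V (i + 1) x})"

lemma Ap_apartment: assumes "x \<in> Qp p" shows "Ap x \<in> bt_apartments p"
proof -
  have "inj (\<lambda>i. V i x)"
  proof (rule injI)
    fix i j assume "V i x = V j x" from V_eq[OF assms assms this] show "i = j" by simp
  qed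
  moreover have "\<forall>i. bt_adj p (V i x) (V (i + 1) x)" using V_adj[OF assms] by blast
  ultimately show ?thesis unfolding bt_apartments_def Ap_def
    by (intro CollectI exI[of _ "\<lambda>i. V i x"]) simp
qed

lemma Ap_inj: assumes "x \<in> Qp p" "y \<in> Qp p" "Ap x = Ap y" shows "x = y"
proof -
  have le: "qabs (A x (M (R (-1)) y)) \<le> real p powr (- real_of_int i)" for i
  proof -
    have "{V i x, V (i + 1) x} \<in> Ap y" using assms(3) unfolding Ap_def by blast
    then obtain k where "{V i x, V (i + 1) x} = {V k y, V (k + 1) y}" unfolding Ap_def by blast
    hence "V i x = V k y \<or> V i x = V (k + 1) y" by blast
    thus ?thesis
    proof
      assume "V i x = V k y" from V_eq[OF assms(1,2) this] show ?thesis by (rule conjunct2)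
    next
      assume "V i x = V (k + 1) y" from V_eq[OF assms(1,2) this] show ?thesis by (rule conjunct2)
    qed
  qed
  have qz: "qabs (A x (M (R (-1)) y)) = 0"
  proof (rule ccontr)
    assume "qabs (A x (M (R (-1)) y)) \<noteq> 0"
    hence "qabs (A x (M (R (-1)) y)) > 0" using qabs_nonneg[of "A x (M (R (-1)) y)"] assms by simp
    then obtain N where "real p powr (- real N) < qabs (A x (M (R (-1)) y))" using ppowr_small by blast
    thus False using le[of "int N"] by simp
  qed
  hence "A x (M (R (-1)) y) = R 0" using qabs_zero assms by simp
  thus ?thesis using sub_zero assms by blast
qed

lemma apartments_uncountable: "\<not> countable (bt_apartments p)"
proof
  assume c: "countable (bt_apartments p)"
  have "range (\<lambda>\<sigma>. Ap (X \<sigma>)) \<subseteq> bt_apartments p" using Ap_apartment X_Qp by blast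
  hence "countable (range (\<lambda>\<sigma>. Ap (X \<sigma>)))" using c countable_subset by blast
  moreover have "inj (\<lambda>\<sigma>. Ap (X \<sigma>))"
  proof (rule injI)
    fix a b assume "Ap (X a) = Ap (X b)"
    hence "X a = X b" using Ap_inj[OF X_Qp X_Qp] by blast
    thus "a = b" by (rule X_inj)
  qed
  ultimately have "countable (UNIV :: (nat \<Rightarrow> bool) set)" by (rule countable_image_inj_on)
  thus False using uncountable_nat_bool by blast
qed

end


definition ginv :: "rat^2^2 \<Rightarrow> rat^2^2" where
  "ginv g = (\<chi> i j. if i = 1 \<and> j = 1 then g$2$2 else if i = 1 \<and> j = 2 then - g$1$2
      else if i = 2 \<and> j = 1 then - g$2$1 else g$1$1)"

lemma ginv_entries: "ginv g $1$1 = g$2$2" "ginv g $1$2 = - g$1$2" "ginv g $2$1 = - g$2$1" "ginv g $2$2 = g$1$1"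
  unfolding ginv_def by simp_all

lemma mm_entries: fixes a b :: "rat^2^2"
  shows "(a ** b)$i$j = a$i$1 * b$1$j + a$i$2 * b$2$j"
  unfolding matrix_matrix_mult_def by (simp add: sum_2)

lemma ginv_mult: assumes "det g = 1" shows "ginv g ** g = mat 1"
proof -
  have d: "g$1$1 * g$2$2 - g$1$2 * g$2$1 = 1" using assms by (simp add: det_2)
  show ?thesis unfolding vec_eq_iff forall_2 mm_entries ginv_entries
    using d by (simp add: mat_def algebra_simps)
qed

lemma det_ginv: "det (ginv g) = det g"
  by (simp add: det_2 ginv_entries algebra_simps)

lemma SL2Q_mult: "a \<in> SL2Q \<Longrightarrow> b \<in> SL2Q \<Longrightarrow> a ** b \<in> SL2Q"
  unfolding SL2Q_def by (simp add: det_mul)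

lemma SL2Q_ginv: "a \<in> SL2Q \<Longrightarrow> ginv a \<in> SL2Q"
  unfolding SL2Q_def by (simp add: det_ginv)

lemma SL2Q_one: "mat 1 \<in> SL2Q" unfolding SL2Q_def by simp

context padic begin

lemma act_vec_comp: assumes "u \<in> Qp p" "v \<in> Qp p"
  shows "act_vec p g2 (act_vec p g1 (u, v)) = act_vec p (g2 ** g1) (u, v)"
  unfolding act_vec_def using assms by (simp add: L1 mm_entries)

lemma act_vec_one: assumes "u \<in> Qp p" "v \<in> Qp p" shows "act_vec p (mat 1) (u, v) = (u, v)"
  unfolding act_vec_def using assms by (simp add: mat_def L2)

lemma act_vec_Qp: assumes "u \<in> Qp p" "v \<in> Qp p"
  shows "fst (act_vec p g (u, v)) \<in> Qp p" "snd (act_vec p g (u, v)) \<in> Qp p"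
  unfolding act_vec_def using assms by simp_all

definition goodv :: "vertex \<Rightarrow> bool" where
  "goodv x \<longleftrightarrow> (\<forall>L\<in>x. \<forall>z\<in>L. fst z \<in> Qp p \<and> snd z \<in> Qp p)"

lemma vertex_good: assumes "x \<in> bt_vertices p" shows "goodv x"
proof -
  obtain L0 where L0: "is_lattice p L0" "x = homothety_class p L0" using assms unfolding bt_vertices_def by blast
  obtain a b c d where abcd: "a \<in> Qp p" "b \<in> Qp p" "c \<in> Qp p" "d \<in> Qp p"
    "L0 = {(A (M s a) (M t c), A (M s b) (M t d)) | s t. s \<in> Zp p \<and> t \<in> Zp p}"
    using L0(1) unfolding is_lattice_def by blast
  have L0Q: "fst z \<in> Qp p \<and> snd z \<in> Qp p" if "z \<in> L0" for z
    using that abcd by (auto simp: Zp_Qp)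
  show ?thesis unfolding goodv_def
  proof (intro ballI)
    fix L z assume "L \<in> x" "z \<in> L"
    then obtain e where e: "e \<in> Qp p" "L = scale_lattice p e L0" using L0(2) unfolding homothety_class_def by blast
    have "z \<in> scale_lattice p e L0" using \<open>z \<in> L\<close> e(2) by simp
    then obtain u v where "(u, v) \<in> L0" "z = (M e u, M e v)" unfolding scale_mem by blast
    thus "fst z \<in> Qp p \<and> snd z \<in> Qp p" using L0Q e(1) by fastforce
  qed
qed

lemma act_vertex_comp: assumes "goodv x"
  shows "act_vertex p g2 (act_vertex p g1 x) = act_vertex p (g2 ** g1) x"
proof -
  have "act_vec p g2 ` act_vec p g1 ` L = act_vec p (g2 ** g1) ` L" if "L \<in> x" for L
  proof -
    have "act_vec p g2 (act_vec p g1 z) = act_vec p (g2 ** g1) z" if "z \<in> L" for z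
    proof -
      have zq: "fst z \<in> Qp p" "snd z \<in> Qp p" using assms \<open>L \<in> x\<close> that unfolding goodv_def by auto
      obtain u v where z: "z = (u, v)" by (cases z)
      show ?thesis using act_vec_comp zq unfolding z by simp
    qed
    thus ?thesis by (simp add: image_image cong: image_cong)
  qed
  thus ?thesis unfolding act_vertex_def by (simp add: image_image cong: image_cong)
qed

lemma act_vertex_one: assumes "goodv x" shows "act_vertex p (mat 1) x = x"
proof -
  have "act_vec p (mat 1) ` L = L" if "L \<in> x" for L
  proof -
    have "act_vec p (mat 1) z = z" if "z \<in> L" for z
    proof -
      have zq: "fst z \<in> Qp p" "snd z \<in> Qp p" using assms \<open>L \<in> x\<close> that unfolding goodv_def by auto
      obtain u v where z: "z = (u, v)" by (cases z)
      show ?thesis using act_vec_one zq unfolding z by simp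
    qed
    thus ?thesis by (simp cong: image_cong)
  qed
  thus ?thesis unfolding act_vertex_def by (simp cong: image_cong)
qed

lemma act_vertex_inj: assumes "g \<in> SL2Q" "x \<in> bt_vertices p" "y \<in> bt_vertices p"
  "act_vertex p g x = act_vertex p g y" shows "x = y"
proof -
  have gg: "ginv g ** g = mat 1" using assms(1) unfolding SL2Q_def by (intro ginv_mult) simp
  have "x = act_vertex p (ginv g) (act_vertex p g x)"
    using act_vertex_comp[OF vertex_good[OF assms(2)]] act_vertex_one[OF vertex_good[OF assms(2)]] gg by simp
  also have "\<dots> = act_vertex p (ginv g) (act_vertex p g y)" using assms(4) by simp
  also have "\<dots> = y"
    using act_vertex_comp[OF vertex_good[OF assms(3)]] act_vertex_one[OF vertex_good[OF assms(3)]] gg by simp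
  finally show ?thesis .
qed

end


lemma aut_tau:
  fixes \<tau> :: "int \<Rightarrow> int"
  assumes st: "\<And>i. \<tau> (i + 1) = \<tau> i + 1 \<or> \<tau> (i + 1) = \<tau> i - 1"
    and ne: "\<And>i. \<tau> (i + 2) \<noteq> \<tau> i"
  shows "(\<forall>i. \<tau> i = \<tau> 0 + i) \<or> (\<forall>i. \<tau> i = \<tau> 0 - i)"
proof -
  define d where "d = \<tau> 1 - \<tau> 0"
  have d: "d = 1 \<or> d = -1" unfolding d_def using st[of 0] by auto
  have D: "\<tau> (i + 1) - \<tau> i = d" for i
  proof (induction i rule: int_induct[where k = 0])
    case base show ?case unfolding d_def by simp
  next
    case (step1 i)
    have "\<tau> (i + 1 + 1) = \<tau> (i + 1) + 1 \<or> \<tau> (i + 1 + 1) = \<tau> (i + 1) - 1" by (rule st)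
    moreover have "\<tau> (i + 1 + 1) \<noteq> \<tau> i" using ne[of i] by (simp add: add.assoc)
    ultimately show ?case using step1(2) d by auto
  next
    case (step2 i)
    have "\<tau> (i - 1 + 1) = \<tau> (i - 1) + 1 \<or> \<tau> (i - 1 + 1) = \<tau> (i - 1) - 1" by (rule st)
    moreover have "\<tau> (i + 1) \<noteq> \<tau> (i - 1)"
    proof -
      have eq: "i - 1 + 2 = i + 1" by simp
      show ?thesis using ne[of "i - 1"] unfolding eq .
    qed
    ultimately show ?case using step2(2) d by auto
  qed
  have T: "\<tau> i = \<tau> 0 + d * i" for i
  proof (induction i rule: int_induct[where k = 0])
    case base show ?case by simp
  next
    case (step1 i) thus ?case using D[of i] by (simp add: algebra_simps)
  next
    case (step2 i) thus ?case using D[of "i - 1"] by (simp add: algebra_simps)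
  qed
  from d show ?thesis
  proof
    assume d1: "d = 1"
    have "\<tau> i = \<tau> 0 + i" for i using T[of i] d1 by simp
    thus ?thesis by blast
  next
    assume d1: "d = -1"
    have "\<tau> i = \<tau> 0 - i" for i using T[of i] d1 by simp
    thus ?thesis by blast
  qed
qed

context padic begin

definition Ef :: "(int \<Rightarrow> vertex) \<Rightarrow> int \<Rightarrow> edge" where "Ef f i = {f i, f (i + 1)}"

definition linef :: "(int \<Rightarrow> vertex) \<Rightarrow> bool" where
  "linef f \<longleftrightarrow> inj f \<and> (\<forall>i. bt_adj p (f i) (f (i + 1)))"

lemma linef_vertex: assumes "linef f" shows "f i \<in> bt_vertices p"
proof -
  have "bt_adj p (f i) (f (i + 1))" using assms unfolding linef_def by blast
  thus ?thesis unfolding bt_adj_def by (rule conjunct1)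
qed

lemma act_edge_pair: "act_edge p g {a, b} = {act_vertex p g a, act_vertex p g b}"
  unfolding act_edge_def by simp

lemma stab_tau: assumes lf: "linef f" and g: "g \<in> SL2Q"
  and stab: "act_apartment p g (range (Ef f)) = range (Ef f)"
  shows "\<exists>\<tau>. (\<forall>i. act_vertex p g (f i) = f (\<tau> i)) \<and> ((\<forall>i. \<tau> i = \<tau> 0 + i) \<or> (\<forall>i. \<tau> i = \<tau> 0 - i))"
proof -
  have inj: "inj f" using lf unfolding linef_def by simp
  have edge: "\<exists>j. {act_vertex p g (f i), act_vertex p g (f (i + 1))} = {f j, f (j + 1)}" for i
  proof -
    have "act_edge p g (Ef f i) \<in> act_apartment p g (range (Ef f))" unfolding act_apartment_def by simp
    hence "act_edge p g (Ef f i) \<in> range (Ef f)" using stab by simp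
    thus ?thesis unfolding Ef_def act_edge_pair by auto
  qed
  have "\<exists>k. act_vertex p g (f i) = f k" for i using edge[of i] by (auto simp: doubleton_eq_iff)
  then obtain \<tau> where tau: "\<And>i. act_vertex p g (f i) = f (\<tau> i)" by metis
  have finj: "f a = f b \<longleftrightarrow> a = b" for a b using inj by (auto dest: injD)
  have gne: "act_vertex p g (f a) \<noteq> act_vertex p g (f b)" if "a \<noteq> b" for a b
    using act_vertex_inj[OF g linef_vertex[OF lf] linef_vertex[OF lf], of a b] that finj by blast
  have st: "\<tau> (i + 1) = \<tau> i + 1 \<or> \<tau> (i + 1) = \<tau> i - 1" for i
  proof -
    obtain j where j: "{f (\<tau> i), f (\<tau> (i + 1))} = {f j, f (j + 1)}" using edge[of i] tau by metis
    have "\<tau> i \<noteq> \<tau> (i + 1)" using gne[of i "i + 1"] tau by auto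
    thus ?thesis using j by (auto simp: doubleton_eq_iff finj)
  qed
  have ne: "\<tau> (i + 2) \<noteq> \<tau> i" for i using gne[of "i + 2" i] tau by auto
  show ?thesis using aut_tau[OF st ne] tau by blast
qed

lemma orbit_self: assumes lf: "linef f" shows "range (Ef f) \<in> orbit_apartment p (range (Ef f))"
proof -
  have "act_edge p (mat 1) (Ef f i) = Ef f i" for i
    unfolding Ef_def act_edge_pair using act_vertex_one[OF vertex_good[OF linef_vertex[OF lf]]] by simp
  hence "act_apartment p (mat 1) (range (Ef f)) = range (Ef f)" unfolding act_apartment_def
    by (simp add: image_image)
  thus ?thesis unfolding orbit_apartment_def using SL2Q_one by (metis imageI)
qed

lemma pm_case: fixes t :: "int \<Rightarrow> int" and a :: int and f :: "int \<Rightarrow> 'a"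
  assumes finj: "\<And>a b. f a = f b \<longleftrightarrow> a = b"
  and t: "(\<forall>i. t i = t 0 + i) \<or> (\<forall>i. t i = t 0 - i)"
  and e: "{f (t 0), f (t 1)} = {f a, f (a + 1)}"
  shows "(\<forall>i. t i = a + i) \<or> (\<forall>i. t i = a + 1 - i)"
  using t
proof
  assume h: "\<forall>i. t i = t 0 + i"
  have t1: "t 1 = t 0 + 1" using spec[OF h, of 1] by simp
  have "(t 0 = a \<and> t 1 = a + 1) \<or> (t 0 = a + 1 \<and> t 1 = a)" using e unfolding doubleton_eq_iff finj .
  hence t0: "t 0 = a" using t1 by arith
  have "t i = a + i" for i using spec[OF h, of i] t0 by simp
  thus ?thesis by blast
next
  assume h: "\<forall>i. t i = t 0 - i"
  have t1: "t 1 = t 0 - 1" using spec[OF h, of 1] by simp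
  have "(t 0 = a \<and> t 1 = a + 1) \<or> (t 0 = a + 1 \<and> t 1 = a)" using e unfolding doubleton_eq_iff finj .
  hence t0: "t 0 = a + 1" using t1 by arith
  have "t i = a + 1 - i" for i using spec[OF h, of i] t0 by simp
  thus ?thesis by blast
qed

lemma ST_tr: assumes "strongly_transitive_wrt p AS" "S1 \<in> AS" "C \<in> S1" "S2 \<in> AS" "C' \<in> S2"
  shows "\<exists>g\<in>SL2Q. act_apartment p g S1 = S2 \<and> act_edge p g C = C'"
proof -
  have "\<forall>S\<in>AS. \<forall>C\<in>S. \<forall>S'\<in>AS. \<forall>C'\<in>S'. \<exists>g\<in>SL2Q. act_apartment p g S = S' \<and> act_edge p g C = C'"
    using assms(1) unfolding strongly_transitive_wrt_def by (rule conjunct2)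
  thus ?thesis using assms(2-5) by blast
qed

lemma translation: assumes lf: "linef f"
  and ST: "strongly_transitive_wrt p (orbit_apartment p (range (Ef f)))"
  shows "\<exists>h\<in>SL2Q. \<exists>k. (k = 1 \<or> k = 2) \<and> (\<forall>i. act_vertex p h (f i) = f (i + k))"
proof -
  let ?S = "range (Ef f)"
  have inj: "inj f" using lf unfolding linef_def by simp
  have finj: "f a = f b \<longleftrightarrow> a = b" for a b using inj by (auto dest: injD)
  have SA: "?S \<in> orbit_apartment p ?S" by (rule orbit_self[OF lf])
  have tr: "\<exists>g\<in>SL2Q. act_apartment p g ?S = ?S \<and> act_edge p g (Ef f 0) = Ef f j" for j
    using ST_tr[OF ST SA _ SA] by blast
  obtain g1 where g1: "g1 \<in> SL2Q" "act_apartment p g1 ?S = ?S" "act_edge p g1 (Ef f 0) = Ef f 1"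
    using tr[of 1] by blast
  obtain g2 where g2: "g2 \<in> SL2Q" "act_apartment p g2 ?S = ?S" "act_edge p g2 (Ef f 0) = Ef f 2"
    using tr[of 2] by blast
  obtain t1 where t1: "\<forall>i. act_vertex p g1 (f i) = f (t1 i)" "(\<forall>i. t1 i = t1 0 + i) \<or> (\<forall>i. t1 i = t1 0 - i)"
    using stab_tau[OF lf g1(1,2)] by blast
  obtain t2 where t2: "\<forall>i. act_vertex p g2 (f i) = f (t2 i)" "(\<forall>i. t2 i = t2 0 + i) \<or> (\<forall>i. t2 i = t2 0 - i)"
    using stab_tau[OF lf g2(1,2)] by blast
  have e1: "{f (t1 0), f (t1 1)} = {f 1, f 2}" using g1(3) t1(1) unfolding Ef_def act_edge_pair by simp
  have e2: "{f (t2 0), f (t2 1)} = {f 2, f 3}" using g2(3) t2(1) unfolding Ef_def act_edge_pair by simp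
  have c1: "(\<forall>i. t1 i = 1 + i) \<or> (\<forall>i. t1 i = 2 - i)"
    using pm_case[OF finj t1(2), of 1] e1 by simp
  have c2: "(\<forall>i. t2 i = 2 + i) \<or> (\<forall>i. t2 i = 3 - i)"
    using pm_case[OF finj t2(2), of 2] e2 by simp
  show ?thesis
  proof (cases "\<forall>i. t1 i = 1 + i")
    case True
    thus ?thesis using g1(1) t1(1) by (intro bexI[of _ g1] exI[of _ 1]) (auto simp: add.commute)
  next
    case F1: False
    hence r1: "\<forall>i. t1 i = 2 - i" using c1 by blast
    show ?thesis
    proof (cases "\<forall>i. t2 i = 2 + i")
      case True
      thus ?thesis using g2(1) t2(1) by (intro bexI[of _ g2] exI[of _ 2]) (auto simp: add.commute)
    next
      case False
      hence r2: "\<forall>i. t2 i = 3 - i" using c2 by blast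
      have "act_vertex p (g2 ** g1) (f i) = f (i + 1)" for i
      proof -
        have "act_vertex p (g2 ** g1) (f i) = act_vertex p g2 (act_vertex p g1 (f i))"
          using act_vertex_comp[OF vertex_good[OF linef_vertex[OF lf]]] by simp
        also have "\<dots> = f (3 - (2 - i))" using t1(1) t2(1) r1 r2 by simp
        finally show ?thesis by (simp add: add.commute)
      qed
      thus ?thesis using SL2Q_mult[OF g2(1) g1(1)] by (intro bexI[of _ "g2 ** g1"] exI[of _ 1]) auto
    qed
  qed
qed

lemma window: assumes lf: "linef f"
  and ST: "strongly_transitive_wrt p (orbit_apartment p (range (Ef f)))"
  and E: "{v0, v1} \<in> bt_edges p"
  shows "\<exists>g\<in>SL2Q. \<exists>b. f i = act_vertex p g (if b then v0 else v1)"
proof -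
  let ?S = "range (Ef f)"
  have SA: "?S \<in> orbit_apartment p ?S" by (rule orbit_self[OF lf])
  have Ei: "Ef f i \<in> bt_edges p" unfolding bt_edges_def Ef_def using lf unfolding linef_def by blast
  obtain S' where S': "S' \<in> orbit_apartment p ?S" "{v0, v1} \<in> S'" "Ef f i \<in> S'"
  proof -
    have "apartment_system p (orbit_apartment p ?S)" using ST unfolding strongly_transitive_wrt_def by (rule conjunct1)
    hence "\<forall>C\<in>bt_edges p. \<forall>D\<in>bt_edges p. \<exists>S\<in>orbit_apartment p ?S. C \<in> S \<and> D \<in> S"
      unfolding apartment_system_def by (rule conjunct2)
    thus ?thesis using E Ei that by blast
  qed
  obtain g where g: "g \<in> SL2Q" "act_edge p g {v0, v1} = Ef f i"
    using ST_tr[OF ST S'(1,2) SA] by blast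
  have "f i \<in> {act_vertex p g v0, act_vertex p g v1}" using g(2) unfolding act_edge_pair Ef_def by auto
  thus ?thesis using g(1) by (intro bexI[of _ g]) (auto intro: exI[of _ True] exI[of _ False])
qed

lemma unique_line: assumes lf: "linef f" and lf': "linef f'" and h: "h \<in> SL2Q" and k: "k = 1 \<or> k = 2"
  and tf: "\<And>i. act_vertex p h (f i) = f (i + k)" and tf': "\<And>i. act_vertex p h (f' i) = f' (i + k)"
  and f0: "f 0 = f' 0" and f1: "f 1 = f' 1"
  shows "f = f'"
proof -
  have pos: "f (int n) = f' (int n)" for n
  proof (induction n rule: less_induct)
    case (less n)
    show ?case
    proof (cases "n < 2")
      case True thus ?thesis using f0 f1 by (cases n) (auto simp: less_Suc_eq)
    next
      case False
      define m where "m = nat (int n - k)"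
      have m: "int m + k = int n" "m < n" unfolding m_def using False k by auto
      have "f (int n) = act_vertex p h (f (int m))" using tf[of "int m"] m by simp
      also have "\<dots> = act_vertex p h (f' (int m))" using less m by simp
      also have "\<dots> = f' (int n)" using tf'[of "int m"] m by simp
      finally show ?thesis .
    qed
  qed
  have all: "\<forall>i\<ge>- int n. f i = f' i" for n
  proof (induction n)
    case 0
    show ?case
    proof (intro allI impI)
      fix i :: int assume "i \<ge> - int 0"
      hence "i = int (nat i)" by simp
      thus "f i = f' i" using pos[of "nat i"] by metis
    qed
  next
    case (Suc n)
    show ?case
    proof (intro allI impI)
      fix i assume i: "i \<ge> - int (Suc n)"
      show "f i = f' i"
      proof (cases "i \<ge> - int n")
        case True thus ?thesis using Suc by blast
      next
        case False
        hence "i + k \<ge> - int n" using i k by auto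
        hence "f (i + k) = f' (i + k)" using Suc by blast
        hence "act_vertex p h (f i) = act_vertex p h (f' i)" using tf tf' by simp
        thus ?thesis using act_vertex_inj[OF h linef_vertex[OF lf] linef_vertex[OF lf']] by blast
      qed
    qed
  qed
  show ?thesis
  proof
    fix i
    show "f i = f' i" using all[of "nat (- i)"] by simp
  qed
qed

end


type_synonym datum = "(rat^2^2) \<times> int \<times> ((rat^2^2) \<times> bool) \<times> ((rat^2^2) \<times> bool)"

context padic begin

definition v0 :: vertex where "v0 = V 0 (R 0)"
definition v1 :: vertex where "v1 = V 1 (R 0)"

lemma E0_edge: "{v0, v1} \<in> bt_edges p"
proof -
  have "bt_adj p (V 0 (R 0)) (V (0 + 1) (R 0))" by (rule V_adj) simp
  thus ?thesis unfolding bt_edges_def v0_def v1_def by auto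
qed

definition good_data :: "apartment \<Rightarrow> datum \<Rightarrow> bool" where
  "good_data S d \<longleftrightarrow> (case d of (h, k, (g0, b0), (g1, b1)) \<Rightarrow>
     \<exists>f. S = range (Ef f) \<and> linef f \<and> h \<in> SL2Q \<and> (k = 1 \<or> k = 2) \<and>
       (\<forall>i. act_vertex p h (f i) = f (i + k)) \<and>
       f 0 = act_vertex p g0 (if b0 then v0 else v1) \<and> f 1 = act_vertex p g1 (if b1 then v0 else v1))"

lemma exists_data: assumes "S \<in> bt_apartments p" "strongly_transitive_wrt p (orbit_apartment p S)"
  shows "\<exists>d. good_data S d"
proof -
  obtain f :: "int \<Rightarrow> vertex" where f: "S = range (\<lambda>i. {f i, f (i + 1)})" "inj f" "\<forall>i. bt_adj p (f i) (f (i + 1))"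
    using assms(1) unfolding bt_apartments_def by blast
  have S: "S = range (Ef f)" unfolding f(1) Ef_def ..
  have lf: "linef f" unfolding linef_def using f(2,3) by blast
  have ST: "strongly_transitive_wrt p (orbit_apartment p (range (Ef f)))" using assms(2) S by simp
  obtain h k where hk: "h \<in> SL2Q" "k = 1 \<or> k = 2" "\<forall>i. act_vertex p h (f i) = f (i + k)"
    using translation[OF lf ST] by blast
  obtain g0 b0 where gb0: "g0 \<in> SL2Q" "f 0 = act_vertex p g0 (if b0 then v0 else v1)"
    using window[OF lf ST E0_edge, of 0] by blast
  obtain g1 b1 where gb1: "g1 \<in> SL2Q" "f 1 = act_vertex p g1 (if b1 then v0 else v1)"
    using window[OF lf ST E0_edge, of 1] by blast
  have "good_data S (h, k, (g0, b0), (g1, b1))" unfolding good_data_def prod.case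
    using S lf hk gb0 gb1 by blast
  thus ?thesis by blast
qed

lemma data_inj: assumes "good_data S d" "good_data S' d" shows "S = S'"
proof -
  obtain h k g0 b0 g1 b1 where d: "d = (h, k, (g0, b0), (g1, b1))" by (cases d) auto
  obtain f :: "int \<Rightarrow> vertex" where f: "S = range (Ef f)" "linef f" "h \<in> SL2Q" "k = 1 \<or> k = 2"
    "\<forall>i. act_vertex p h (f i) = f (i + k)"
    "f 0 = act_vertex p g0 (if b0 then v0 else v1)" "f 1 = act_vertex p g1 (if b1 then v0 else v1)"
    using assms(1) unfolding d good_data_def prod.case by blast
  obtain f' :: "int \<Rightarrow> vertex" where f': "S' = range (Ef f')" "linef f'"
    "\<forall>i. act_vertex p h (f' i) = f' (i + k)"
    "f' 0 = act_vertex p g0 (if b0 then v0 else v1)" "f' 1 = act_vertex p g1 (if b1 then v0 else v1)"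
    using assms(2) unfolding d good_data_def prod.case by blast
  have "f = f'" using f(2) f'(2) f(3) f(4)
  proof (rule unique_line)
    show "act_vertex p h (f i) = f (i + k)" for i using f(5) by blast
    show "act_vertex p h (f' i) = f' (i + k)" for i using f'(3) by blast
    show "f 0 = f' 0" using f(6) f'(4) by simp
    show "f 1 = f' 1" using f(7) f'(5) by simp
  qed
  thus ?thesis using f(1) f'(1) by simp
qed

lemma countable_part: "countable {S \<in> bt_apartments p. strongly_transitive_wrt p (orbit_apartment p S)}"
  (is "countable ?T")
proof -
  define \<Phi> where "\<Phi> S = (SOME d. good_data S d)" for S
  have g: "good_data S (\<Phi> S)" if ST: "S \<in> ?T" for S
  proof -
    have "S \<in> bt_apartments p" "strongly_transitive_wrt p (orbit_apartment p S)" using ST by auto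
    then obtain d where "good_data S d" using exists_data by blast
    thus ?thesis unfolding \<Phi>_def by (rule someI)
  qed
  have "inj_on \<Phi> ?T"
  proof (rule inj_onI)
    fix S S' assume "S \<in> ?T" "S' \<in> ?T" "\<Phi> S = \<Phi> S'"
    note h = this
    have "good_data S (\<Phi> S)" using g h(1) by blast
    moreover have "good_data S' (\<Phi> S)" using g h(2) h(3) by simp
    ultimately show "S = S'" by (rule data_inj)
  qed
  moreover have "countable (\<Phi> ` ?T)" by simp
  ultimately show ?thesis using countable_image_inj_on by blast
qed

end

theorem mainTheorem16:
  fixes p :: nat
  assumes "prime p"
  shows "countable {S \<in> bt_apartments p. strongly_transitive_wrt p (orbit_apartment p S)}
         \<and> \<not> countable (bt_apartments p)"
proof -
  interpret padic p using assms by unfold_locales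
  show ?thesis using countable_part apartments_uncountable by blast
qed

end
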